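(* Let $\mathcal{X}$ and $\mathcal{V}$ be infinite sets (of alternatives and voters). There is no voting method $F$ (on profiles with alternatives from $\mathcal{X}$ and voters from $\mathcal{V}$) that simultaneously satisfies positive involvement, the Condorcet winner criterion, the Condorcet loser criterion, resolvability, and ordinal margin invariance. This holds whether resolvability is taken to mean single-voter resolvability or asymptotic resolvability.
   Context: A profile $\mathbf{P}$ is a function from a nonempty finite set $V(\mathbf{P})\subseteq\mathcal{V}$ (the voters of $\mathbf{P}$) to the set of strict weak orders on a nonempty finite set $X(\mathbf{P})\subseteq\mathcal{X}$ (the alternatives of $\mathbf{P}$); $(x,y)\in\mathbf{P}(i)$ means voter $i$ strictly prefers $x$ to $y$. The profile is linear if every $\mathbf{P}(i)$ is a linear order. For $x,y\in X(\mathbf{P})$, $\mathrm{Support}_\mathbf{P}(a,b)=|\{i\in V(\mathbf{P}) : (a,b)\in\mathbf{P}(i)\}|$ and $\mathrm{Margin}_\mathbf{P}(x,y)=\mathrm{Support}_\mathbf{P}(x,y)-\mathrm{Support}_\mathbf{P}(y,x)$. A voting method is a function $F$ assigning to every profile $\mathbf{P}$ a nonempty subset $F(\mathbf{P})\subseteq X(\mathbf{P})$. Positive involvement: for all profiles $\mathbf{P},\mathbf{P}'$, if $x\in F(\mathbf{P})$ and $\mathbf{P}'$ is obtained from $\mathbf{P}$ by adding one new voter whose ranking (over $X(\mathbf{P})$) places $x$ uniquely first, then $x\in F(\mathbf{P}')$. Condorcet winner criterion: whenever $\mathbf{P}$ has a Condorcet winner $x$ (i.e. $\mathrm{Margin}_\mathbf{P}(x,y)>0$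 for all $y\neq x$), $F(\mathbf{P})=\{x\}$. Condorcet loser criterion: $F(\mathbf{P})$ never contains a Condorcet loser, i.e. an $x$ with $\mathrm{Margin}_\mathbf{P}(y,x)>0$ for all $y\in X(\mathbf{P})\setminus\{x\}$. Single-voter resolvability: for every profile $\mathbf{P}$ with $|F(\mathbf{P})|>1$ there is a profile $\mathbf{P}'$ obtained from $\mathbf{P}$ by adding exactly one new voter such that $|F(\mathbf{P}')|=1$. Asymptotic resolvability: for every positive integer $m$, as the number $n$ of voters tends to infinity, the proportion of linear profiles with $m$ (fixed) alternatives and $n$ voters for which $|F(\mathbf{P})|>1$ tends to $0$. Ordinal margin graph: $\mathbb{M}(\mathbf{P})=(M,\succ)$ where $M$ is the directed graph on $X(\mathbf{P})$ with an edge $x\to y$ iff $\mathrm{Margin}_\mathbf{P}(x,y)>0$, and $\succ$ is the strict weak order on edges with $(a,b)\succ(c,d)$ iff $\mathrm{Margin}_\mathbf{P}(a,b)>\mathrm{Margin}_\mathbf{P}(c,d)$. Ordinal margin invariance: $\mathbb{M}(\mathbf{P})=\mathbb{M}(\mathbf{P}')$ implies $F(\mathbf{P})=F(\mathbf{P}')$. *)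

theory Defs
  imports Complex_Main
begin

text \<open>A (candidate) profile: voter set, alternative set, and for each voter a strict
  preference relation; (x,y) in prefs P i means voter i strictly prefers x to y.
  For canonicity, voters outside the voter set are required to have the empty relation.\<close>
record ('v, 'x) profile =
  voters :: "'v set"
  alts   :: "'x set"
  prefs  :: "'v \<Rightarrow> ('x \<times> 'x) set"

definition strict_weak_order_on :: "'x set \<Rightarrow> ('x \<times> 'x) set \<Rightarrow> bool" where
  "strict_weak_order_on X R \<longleftrightarrow>
     R \<subseteq> X \<times> X \<and>
     (\<forall>a\<in>X. (a, a) \<notin> R) \<and>
     (\<forall>a\<in>X. \<forall>b\<in>X. \<forall>c\<in>X. (a, b) \<in> R \<and> (b, c) \<in> R \<longrightarrow> (a, c) \<in> R) \<and>
     (\<forall>a\<in>X. \<forall>b\<in>X. \<forall>c\<in>X. (a, b) \<in> R \<longrightarrow> (a, c) \<in> R \<or> (c, b) \<in> R)"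

definition linear_order_on' :: "'x set \<Rightarrow> ('x \<times> 'x) set \<Rightarrow> bool" where
  "linear_order_on' X R \<longleftrightarrow> strict_weak_order_on X R \<and>
     (\<forall>a\<in>X. \<forall>b\<in>X. a \<noteq> b \<longrightarrow> (a, b) \<in> R \<or> (b, a) \<in> R)"

definition is_profile :: "('v, 'x) profile \<Rightarrow> bool" where
  "is_profile P \<longleftrightarrow>
     finite (voters P) \<and> voters P \<noteq> {} \<and> finite (alts P) \<and> alts P \<noteq> {} \<and>
     (\<forall>i\<in>voters P. strict_weak_order_on (alts P) (prefs P i)) \<and>
     (\<forall>i. i \<notin> voters P \<longrightarrow> prefs P i = {})"

definition is_linear_profile :: "('v, 'x) profile \<Rightarrow> bool" where
  "is_linear_profile P \<longleftrightarrow> is_profile P \<and>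
     (\<forall>i\<in>voters P. linear_order_on' (alts P) (prefs P i))"

definition support :: "('v, 'x) profile \<Rightarrow> 'x \<Rightarrow> 'x \<Rightarrow> nat" where
  "support P a b = card {i \<in> voters P. (a, b) \<in> prefs P i}"

definition margin :: "('v, 'x) profile \<Rightarrow> 'x \<Rightarrow> 'x \<Rightarrow> int" where
  "margin P x y = int (support P x y) - int (support P y x)"

definition add_voter :: "('v, 'x) profile \<Rightarrow> 'v \<Rightarrow> ('x \<times> 'x) set \<Rightarrow> ('v, 'x) profile" where
  "add_voter P j L = P\<lparr>voters := insert j (voters P), prefs := (prefs P)(j := L)\<rparr>"

definition voting_method :: "(('v, 'x) profile \<Rightarrow> 'x set) \<Rightarrow> bool" where
  "voting_method F \<longleftrightarrow> (\<forall>P. is_profile P \<longrightarrow> F P \<noteq> {} \<and> F P \<subseteq> alts P)"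

definition positive_involvement :: "(('v, 'x) profile \<Rightarrow> 'x set) \<Rightarrow> bool" where
  "positive_involvement F \<longleftrightarrow>
     (\<forall>P x j L. is_profile P \<and> x \<in> F P \<and> j \<notin> voters P \<and>
        strict_weak_order_on (alts P) L \<and> (\<forall>y\<in>alts P - {x}. (x, y) \<in> L)
        \<longrightarrow> x \<in> F (add_voter P j L))"

definition condorcet_winner :: "('v, 'x) profile \<Rightarrow> 'x \<Rightarrow> bool" where
  "condorcet_winner P x \<longleftrightarrow> x \<in> alts P \<and> (\<forall>y\<in>alts P - {x}. margin P x y > 0)"

text \<open>Condorcet loser: only meaningful with at least two alternatives.\<close>
definition condorcet_loser :: "('v, 'x) profile \<Rightarrow> 'x \<Rightarrow> bool" where
  "condorcet_loser P x \<longleftrightarrow> x \<in> alts P \<and> alts P \<noteq> {x} \<and>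
     (\<forall>y\<in>alts P - {x}. margin P y x > 0)"

definition condorcet_winner_criterion :: "(('v, 'x) profile \<Rightarrow> 'x set) \<Rightarrow> bool" where
  "condorcet_winner_criterion F \<longleftrightarrow>
     (\<forall>P x. is_profile P \<and> condorcet_winner P x \<longrightarrow> F P = {x})"

definition condorcet_loser_criterion :: "(('v, 'x) profile \<Rightarrow> 'x set) \<Rightarrow> bool" where
  "condorcet_loser_criterion F \<longleftrightarrow>
     (\<forall>P x. is_profile P \<and> condorcet_loser P x \<longrightarrow> x \<notin> F P)"

definition single_voter_resolvable :: "(('v, 'x) profile \<Rightarrow> 'x set) \<Rightarrow> bool" where
  "single_voter_resolvable F \<longleftrightarrow>
     (\<forall>P. is_profile P \<and> card (F P) > 1 \<longrightarrow>
        (\<exists>j L. j \<notin> voters P \<and> strict_weak_order_on (alts P) L \<and>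
               card (F (add_voter P j L)) = 1))"

definition lin_profiles :: "'x set \<Rightarrow> 'v set \<Rightarrow> ('v, 'x) profile set" where
  "lin_profiles X V = {P. is_linear_profile P \<and> alts P = X \<and> voters P = V}"

definition unresolved_proportion ::
    "(('v, 'x) profile \<Rightarrow> 'x set) \<Rightarrow> 'x set \<Rightarrow> 'v set \<Rightarrow> real" where
  "unresolved_proportion F X V =
     real (card {P \<in> lin_profiles X V. card (F P) > 1}) / real (card (lin_profiles X V))"

definition asymptotically_resolvable :: "(('v, 'x) profile \<Rightarrow> 'x set) \<Rightarrow> bool" where
  "asymptotically_resolvable F \<longleftrightarrow>
     (\<forall>X. finite X \<and> X \<noteq> {} \<longrightarrow>
        (\<forall>\<epsilon>>0. \<exists>N. \<forall>V. finite V \<and> card V \<ge> N \<longrightarrow> unresolved_proportion F X V < \<epsilon>))"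

definition ordinal_margin_graph ::
    "('v, 'x) profile \<Rightarrow> 'x set \<times> ('x \<times> 'x) set \<times> (('x \<times> 'x) \<times> ('x \<times> 'x)) set" where
  "ordinal_margin_graph P =
     (let E = {(a, b). a \<in> alts P \<and> b \<in> alts P \<and> margin P a b > 0}
      in (alts P, E,
          {((a, b), (c, d)). (a, b) \<in> E \<and> (c, d) \<in> E \<and> margin P a b > margin P c d}))"

definition ordinal_margin_invariant :: "(('v, 'x) profile \<Rightarrow> 'x set) \<Rightarrow> bool" where
  "ordinal_margin_invariant F \<longleftrightarrow>
     (\<forall>P P'. is_profile P \<and> is_profile P' \<and>
        ordinal_margin_graph P = ordinal_margin_graph P' \<longrightarrow> F P = F P')"

end

theory Submission
  imports Defs "HOL-Library.FuncSet"
begin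

definition dl :: "('x \<times> 'x) set \<Rightarrow> 'x \<Rightarrow> 'x \<Rightarrow> int" where
  "dl L x y = (if (x, y) \<in> L then 1 else 0) - (if (y, x) \<in> L then 1 else 0)"

lemma support_add_voter:
  assumes "finite (voters P)" "j \<notin> voters P"
  shows "support (add_voter P j L) x y = support P x y + (if (x, y) \<in> L then 1 else 0)"
proof -
  have eq: "{i \<in> voters (add_voter P j L). (x, y) \<in> prefs (add_voter P j L) i}
      = (if (x, y) \<in> L then insert j else id) {i \<in> voters P. (x, y) \<in> prefs P i}"
    using assms(2) by (auto simp: add_voter_def)
  show ?thesis using assms unfolding support_def eq by (auto simp: card_insert_if)
qed

lemma margin_add_voter:
  assumes "finite (voters P)" "j \<notin> voters P"
  shows "margin (add_voter P j L) x y = margin P x y + dl L x y"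
  using assms by (simp add: margin_def dl_def support_add_voter)

lemma margin_self[simp]: "margin P x x = 0"
  by (simp add: margin_def)

lemma margin_swap: "margin P y x = - margin P x y"
  by (simp add: margin_def)

definition good :: "('v, 'x) profile \<Rightarrow> bool" where
  "good P \<longleftrightarrow> finite (voters P) \<and> finite (alts P) \<and> alts P \<noteq> {} \<and>
     (\<forall>i\<in>voters P. strict_weak_order_on (alts P) (prefs P i)) \<and>
     (\<forall>i. i \<notin> voters P \<longrightarrow> prefs P i = {})"

lemma is_profile_good: "is_profile P \<longleftrightarrow> good P \<and> voters P \<noteq> {}"
  by (auto simp: is_profile_def good_def)

lemma good_add_voter:
  "good P \<Longrightarrow> strict_weak_order_on (alts P) L \<Longrightarrow> good (add_voter P j L)"
  by (auto simp: good_def add_voter_def)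

lemma add_voter_simps[simp]:
  "alts (add_voter P j L) = alts P" "voters (add_voter P j L) = insert j (voters P)"
  by (auto simp: add_voter_def)

fun addk :: "(nat \<Rightarrow> 'v) \<Rightarrow> nat \<Rightarrow> ('x \<times> 'x) set \<Rightarrow> nat \<Rightarrow> ('v, 'x) profile \<Rightarrow> ('v, 'x) profile" where
  "addk vv n L 0 P = P"
| "addk vv n L (Suc k) P = add_voter (addk vv n L k P) (vv (n + k)) L"

lemma addk_alts[simp]: "alts (addk vv n L k P) = alts P"
  by (induction k) auto

lemma addk_voters: "voters (addk vv n L k P) = voters P \<union> vv ` {n..<n+k}"
  by (induction k) (auto simp: atLeastLessThanSuc)

lemma addk_good: "good P \<Longrightarrow> strict_weak_order_on (alts P) L \<Longrightarrow> good (addk vv n L k P)"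
  by (induction k) (auto intro: good_add_voter)

lemma good_finite: "good P \<Longrightarrow> finite (voters P)"
  by (simp add: good_def)

lemma addk_margin:
  assumes "finite (voters P)" "inj vv" "voters P \<inter> vv ` {n..<n+k} = {}"
  shows "margin (addk vv n L k P) x y = margin P x y + int k * dl L x y"
  using assms
proof (induction k)
  case 0 then show ?case by simp
next
  case (Suc k)
  have IH: "margin (addk vv n L k P) x y = margin P x y + int k * dl L x y"
    using Suc by (auto simp: atLeastLessThanSuc)
  have fin: "finite (voters (addk vv n L k P))" using Suc.prems by (simp add: addk_voters)
  have nin: "vv (n + k) \<notin> voters (addk vv n L k P)"
    using Suc.prems by (auto simp: addk_voters inj_eq atLeastLessThanSuc)
  show ?case using margin_add_voter[OF fin nin] IH by (simp add: algebra_simps)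
qed

lemma addk_PI:
  assumes PI: "positive_involvement F" and "is_profile P" "x \<in> F P"
    and L: "strict_weak_order_on (alts P) L" "\<forall>y\<in>alts P - {x}. (x, y) \<in> L"
    and "inj vv" "voters P \<inter> vv ` {n..<n+k} = {}"
  shows "x \<in> F (addk vv n L k P) \<and> is_profile (addk vv n L k P)"
  using assms(2-)
proof (induction k)
  case 0 then show ?case by simp
next
  case (Suc k)
  have IH: "x \<in> F (addk vv n L k P) \<and> is_profile (addk vv n L k P)"
    using Suc by (auto simp: atLeastLessThanSuc)
  have nin: "vv (n + k) \<notin> voters (addk vv n L k P)"
    using Suc.prems by (auto simp: addk_voters inj_eq atLeastLessThanSuc)
  have "x \<in> F (addk vv n L (Suc k) P)"
    using PI IH nin L unfolding positive_involvement_def by auto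
  moreover have "is_profile (addk vv n L (Suc k) P)"
    using IH L by (auto simp: is_profile_good intro: good_add_voter)
  ultimately show ?case by simp
qed

fun addbs :: "(nat \<Rightarrow> 'v) \<Rightarrow> nat \<Rightarrow> (('x \<times> 'x) set \<times> nat) list \<Rightarrow> ('v, 'x) profile \<Rightarrow> ('v, 'x) profile" where
  "addbs vv n [] P = P"
| "addbs vv n ((L, k) # bs) P = addbs vv (n + k) bs (addk vv n L k P)"

definition tot :: "(('x \<times> 'x) set \<times> nat) list \<Rightarrow> nat" where
  "tot bs = sum_list (map snd bs)"

lemma tot_simps[simp]: "tot [] = 0" "tot ((L, k) # bs) = k + tot bs"
  by (auto simp: tot_def)

lemma addbs_alts[simp]: "alts (addbs vv n bs P) = alts P"
  by (induction bs arbitrary: n P) auto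

lemma addbs_voters: "voters (addbs vv n bs P) = voters P \<union> vv ` {n..<n + tot bs}"
proof (induction bs arbitrary: n P)
  case Nil then show ?case by simp
next
  case (Cons p bs)
  obtain L k where p: "p = (L, k)" by (cases p)
  have "{n..<n + k} \<union> {n + k..<n + k + tot bs} = {n..<n + (k + tot bs)}" by auto
  then show ?case using Cons p
    by (simp add: addk_voters Un_assoc flip: image_Un)
qed

lemma addbs_good: "good P \<Longrightarrow> \<forall>(L, k)\<in>set bs. strict_weak_order_on (alts P) L \<Longrightarrow> good (addbs vv n bs P)"
proof (induction bs arbitrary: n P)
  case Nil then show ?case by simp
next
  case (Cons p bs)
  then show ?case by (cases p) (auto intro!: Cons.IH addk_good)
qed

lemma addbs_margin:
  assumes "finite (voters P)" "inj vv" "voters P \<inter> vv ` {n..} = {}"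
  shows "margin (addbs vv n bs P) x y = margin P x y + (\<Sum>(L, k)\<leftarrow>bs. int k * dl L x y)"
  using assms
proof (induction bs arbitrary: n P)
  case Nil then show ?case by simp
next
  case (Cons p bs)
  obtain L k where p: "p = (L, k)" by (cases p)
  have d: "voters P \<inter> vv ` {n..<n+k} = {}" using Cons.prems by auto
  have fin: "finite (voters (addk vv n L k P))" using Cons.prems by (simp add: addk_voters)
  have d2: "voters (addk vv n L k P) \<inter> vv ` {n + k..} = {}"
    using Cons.prems by (auto simp: addk_voters inj_eq)
  show ?case using Cons.IH[OF fin Cons.prems(2) d2] addk_margin[OF Cons.prems(1,2) d] p
    by simp
qed

lemma addbs_PI:
  assumes PI: "positive_involvement F" and "is_profile P" "x \<in> F P"
    and L: "\<forall>(L, k)\<in>set bs. strict_weak_order_on (alts P) L \<and> (\<forall>y\<in>alts P - {x}. (x, y) \<in> L)"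
    and "inj vv" "voters P \<inter> vv ` {n..} = {}"
  shows "x \<in> F (addbs vv n bs P) \<and> is_profile (addbs vv n bs P)"
  using assms(2-)
proof (induction bs arbitrary: n P)
  case Nil then show ?case by simp
next
  case (Cons p bs)
  obtain L k where p: "p = (L, k)" by (cases p)
  have d: "voters P \<inter> vv ` {n..<n+k} = {}" using Cons.prems by auto
  have 1: "x \<in> F (addk vv n L k P) \<and> is_profile (addk vv n L k P)"
    using addk_PI[OF PI Cons.prems(1,2) _ _ Cons.prems(4) d] Cons.prems(3) p by auto
  have d2: "voters (addk vv n L k P) \<inter> vv ` {n + k..} = {}"
    using Cons.prems by (auto simp: addk_voters inj_eq)
  show ?case using Cons.IH[of "addk vv n L k P" "n + k"] 1 d2 Cons.prems p by auto
qed


fun lin :: "'x list \<Rightarrow> ('x \<times> 'x) set" where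
  "lin [] = {}"
| "lin (x # xs) = Pair x ` set xs \<union> lin xs"

lemma lin_sub: "lin xs \<subseteq> set xs \<times> set xs"
  by (induction xs) auto

lemma lin_irrefl: "distinct xs \<Longrightarrow> (u, u) \<notin> lin xs"
  by (induction xs) auto

lemma lin_trans: "distinct xs \<Longrightarrow> (u, v) \<in> lin xs \<Longrightarrow> (v, w) \<in> lin xs \<Longrightarrow> (u, w) \<in> lin xs"
proof (induction xs)
  case Nil then show ?case by simp
next
  case (Cons x xs)
  show ?case
  proof (cases "(u, v) \<in> lin xs")
    case True
    then have "v \<in> set xs" using lin_sub by blast
    then have "v \<noteq> x" using Cons.prems by auto
    then have "(v, w) \<in> lin xs" using Cons.prems by auto
    then show ?thesis using Cons True by auto
  next
    case False
    then have u: "u = x" "v \<in> set xs" using Cons.prems by auto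
    then have "v \<noteq> x" using Cons.prems by auto
    then have "(v, w) \<in> lin xs" using Cons.prems by auto
    then have "w \<in> set xs" using lin_sub by blast
    then show ?thesis using u by auto
  qed
qed

lemma lin_total: "u \<in> set xs \<Longrightarrow> v \<in> set xs \<Longrightarrow> u \<noteq> v \<Longrightarrow> (u, v) \<in> lin xs \<or> (v, u) \<in> lin xs"
  by (induction xs) auto

lemma lin_linear: "distinct xs \<Longrightarrow> linear_order_on' (set xs) (lin xs)"
proof -
  assume d: "distinct xs"
  have t: "\<forall>a\<in>set xs. \<forall>b\<in>set xs. \<forall>c\<in>set xs. (a, b) \<in> lin xs \<longrightarrow> (a, c) \<in> lin xs \<or> (c, b) \<in> lin xs"
  proof (intro ballI impI)
    fix a b c assume abc: "a \<in> set xs" "b \<in> set xs" "c \<in> set xs" "(a, b) \<in> lin xs"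
    show "(a, c) \<in> lin xs \<or> (c, b) \<in> lin xs"
    proof (cases "c = a \<or> c = b")
      case True then show ?thesis using abc by auto
    next
      case False
      then have "(a, c) \<in> lin xs \<or> (c, a) \<in> lin xs" using lin_total abc by metis
      then show ?thesis using lin_trans[OF d _ abc(4)] by blast
    qed
  qed
  show ?thesis unfolding linear_order_on'_def strict_weak_order_on_def
    using lin_sub[of xs] lin_irrefl[OF d] lin_trans[OF d] lin_total[of _ xs] t by blast
qed

lemma lin_swo: "distinct xs \<Longrightarrow> strict_weak_order_on (set xs) (lin xs)"
  using lin_linear linear_order_on'_def by blast

lemma lin_top: "y \<in> set xs \<Longrightarrow> (x, y) \<in> lin (x # xs)"
  by auto

definition E0 :: "'x set \<Rightarrow> ('v, 'x) profile" where
  "E0 X = \<lparr>voters = {}, alts = X, prefs = (\<lambda>_. {})\<rparr>"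

lemma E0_simps[simp]: "voters (E0 X) = {}" "alts (E0 X) = X" "margin (E0 X) x y = 0"
  by (auto simp: E0_def margin_def support_def)

lemma good_E0: "finite X \<Longrightarrow> X \<noteq> {} \<Longrightarrow> good (E0 X)"
  by (auto simp: good_def E0_def)

definition mkp :: "(nat \<Rightarrow> 'v) \<Rightarrow> 'x set \<Rightarrow> (('x \<times> 'x) set \<times> nat) list \<Rightarrow> ('v, 'x) profile" where
  "mkp vv X bs = addbs vv 0 bs (E0 X)"

lemma mkp_alts[simp]: "alts (mkp vv X bs) = X"
  by (simp add: mkp_def)

lemma mkp_voters: "voters (mkp vv X bs) = vv ` {..<tot bs}"
  by (auto simp: mkp_def addbs_voters)

lemma mkp_margin: "inj vv \<Longrightarrow> margin (mkp vv X bs) x y = (\<Sum>(L, k)\<leftarrow>bs. int k * dl L x y)"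
  unfolding mkp_def by (subst addbs_margin) auto

lemma mkp_profile:
  assumes "finite X" "X \<noteq> {}" "\<forall>(L, k)\<in>set bs. strict_weak_order_on X L" "tot bs > 0"
  shows "is_profile (mkp vv X bs)"
proof -
  have "good (mkp vv X bs)" unfolding mkp_def
    using assms by (intro addbs_good good_E0) auto
  moreover have "voters (mkp vv X bs) \<noteq> {}" using assms(4) by (auto simp: mkp_voters)
  ultimately show ?thesis by (simp add: is_profile_good)
qed

lemma chain_margin:
  assumes "inj vv"
  shows "margin (addbs vv (tot bs) ch (mkp vv X bs)) x y = margin (mkp vv X bs) x y + (\<Sum>(L, k)\<leftarrow>ch. int k * dl L x y)"
  using assms by (subst addbs_margin) (auto simp: mkp_voters inj_eq)

lemma chain_PI:
  assumes "positive_involvement F" "is_profile (mkp vv X bs)" "x \<in> F (mkp vv X bs)"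
    "\<forall>(L, k)\<in>set ch. strict_weak_order_on X L \<and> (\<forall>y\<in>X - {x}. (x, y) \<in> L)" "inj vv"
  shows "x \<in> F (addbs vv (tot bs) ch (mkp vv X bs)) \<and> is_profile (addbs vv (tot bs) ch (mkp vv X bs))"
  using assms by (intro addbs_PI) (auto simp: mkp_voters inj_eq)



lemma omg_eq_order:
  assumes "alts P' = alts P"
    and sg: "\<forall>x\<in>alts P. \<forall>y\<in>alts P. (0 < margin P' x y) = (0 < margin P x y)"
    and ord: "\<forall>x\<in>alts P. \<forall>y\<in>alts P. \<forall>u\<in>alts P. \<forall>v\<in>alts P. 0 < margin P x y \<longrightarrow> 0 < margin P u v \<longrightarrow>
         (margin P' u v < margin P' x y) = (margin P u v < margin P x y)"
  shows "ordinal_margin_graph P' = ordinal_margin_graph P"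
proof -
  have E: "{(a, b). a \<in> alts P \<and> b \<in> alts P \<and> margin P' a b > 0} = {(a, b). a \<in> alts P \<and> b \<in> alts P \<and> margin P a b > 0}"
    using assms(1) sg by auto
  have R: "{((a, b), (c, d)). (a, b) \<in> {(a, b). a \<in> alts P \<and> b \<in> alts P \<and> margin P a b > 0} \<and>
              (c, d) \<in> {(a, b). a \<in> alts P \<and> b \<in> alts P \<and> margin P a b > 0} \<and> margin P' a b > margin P' c d}
         = {((a, b), (c, d)). (a, b) \<in> {(a, b). a \<in> alts P \<and> b \<in> alts P \<and> margin P a b > 0} \<and>
              (c, d) \<in> {(a, b). a \<in> alts P \<and> b \<in> alts P \<and> margin P a b > 0} \<and> margin P a b > margin P c d}"
    using ord by (intro set_eqI) (clarsimp, blast)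
  show ?thesis unfolding ordinal_margin_graph_def Let_def assms(1) E R ..
qed

definition gen :: "int \<Rightarrow> ('x \<Rightarrow> 'x \<Rightarrow> int) \<Rightarrow> 'x set \<Rightarrow> bool" where
  "gen g m X \<longleftrightarrow> (\<forall>x\<in>X. \<forall>y\<in>X. x \<noteq> y \<longrightarrow> g \<le> \<bar>m x y\<bar>) \<and>
     (\<forall>x\<in>X. \<forall>y\<in>X. \<forall>u\<in>X. \<forall>v\<in>X. 0 < m x y \<longrightarrow> 0 < m u v \<longrightarrow> (x, y) \<noteq> (u, v) \<longrightarrow> g \<le> \<bar>m x y - m u v\<bar>)"

lemma omg_eq_close:
  fixes s :: real
  assumes "alts P' = alts P" "gen g (margin P) (alts P)" "g > 0" "s > 0"
    and cl: "\<forall>x\<in>alts P. \<forall>y\<in>alts P. \<bar>real_of_int (margin P' x y) - s * real_of_int (margin P x y)\<bar> < s * real_of_int g / 2"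
  shows "ordinal_margin_graph P' = ordinal_margin_graph P"
proof (rule omg_eq_order[OF assms(1)])
  have sgn: "(0 < margin P' x y) = (0 < margin P x y)" if xy: "x \<in> alts P" "y \<in> alts P" for x y
  proof (cases "x = y")
    case True then show ?thesis by simp
  next
    case False
    then have g: "g \<le> \<bar>margin P x y\<bar>" using assms(2) xy by (auto simp: gen_def)
    have c: "\<bar>real_of_int (margin P' x y) - s * real_of_int (margin P x y)\<bar> < s * real_of_int g / 2"
      using cl xy by auto
    have gr: "s * real_of_int g \<le> s * \<bar>real_of_int (margin P x y)\<bar>"
      using g assms(4) by (intro mult_left_mono) (auto simp flip: of_int_abs)
    show ?thesis
    proof (cases "0 < margin P x y")
      case True
      then have h: "s * real_of_int g \<le> s * real_of_int (margin P x y)" using gr by simp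
      have "0 < s * real_of_int g" using assms(3,4) by simp
      then have "0 < real_of_int (margin P' x y)" using c h unfolding abs_less_iff by linarith
      then show ?thesis using True by simp
    next
      case False
      then have "margin P x y \<le> 0" by simp
      then have h: "s * real_of_int g \<le> - (s * real_of_int (margin P x y))" using gr
        by (simp add: abs_if split: if_splits)
      have "0 < s * real_of_int g" using assms(3,4) by simp
      then have "real_of_int (margin P' x y) < 0" using c h unfolding abs_less_iff by linarith
      then show ?thesis using False by simp
    qed
  qed
  then show "\<forall>x\<in>alts P. \<forall>y\<in>alts P. (0 < margin P' x y) = (0 < margin P x y)" by blast
  show "\<forall>x\<in>alts P. \<forall>y\<in>alts P. \<forall>u\<in>alts P. \<forall>v\<in>alts P. 0 < margin P x y \<longrightarrow> 0 < margin P u v \<longrightarrow>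
         (margin P' u v < margin P' x y) = (margin P u v < margin P x y)"
  proof (intro ballI impI)
    fix x y u v assume xy: "x \<in> alts P" "y \<in> alts P" "u \<in> alts P" "v \<in> alts P"
      and p: "0 < margin P x y" "0 < margin P u v"
    have c1: "\<bar>real_of_int (margin P' x y) - s * real_of_int (margin P x y)\<bar> < s * real_of_int g / 2"
      using cl xy by auto
    have c2: "\<bar>real_of_int (margin P' u v) - s * real_of_int (margin P u v)\<bar> < s * real_of_int g / 2"
      using cl xy by auto
    show "(margin P' u v < margin P' x y) = (margin P u v < margin P x y)"
    proof (cases "(x, y) = (u, v)")
      case True then show ?thesis by auto
    next
      case False
      then have g: "g \<le> \<bar>margin P x y - margin P u v\<bar>" using assms(2) xy p by (auto simp: gen_def)
      have gr: "s * real_of_int g \<le> s * \<bar>real_of_int (margin P x y) - real_of_int (margin P u v)\<bar>"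
        using g assms(4) by (intro mult_left_mono) (auto simp flip: of_int_abs of_int_diff)
      show ?thesis
      proof (cases "margin P u v < margin P x y")
        case True
        then have "s * real_of_int g \<le> s * real_of_int (margin P x y) - s * real_of_int (margin P u v)"
          using gr by (simp add: right_diff_distrib)
        then have "real_of_int (margin P' u v) < real_of_int (margin P' x y)"
          using c1 c2 unfolding abs_less_iff by linarith
        then show ?thesis using True by simp
      next
        case False
        then have "s * real_of_int g \<le> s * real_of_int (margin P u v) - s * real_of_int (margin P x y)"
          using gr by (simp add: right_diff_distrib abs_if split: if_splits)
        then have "real_of_int (margin P' x y) < real_of_int (margin P' u v)"
          using c1 c2 unfolding abs_less_iff by linarith
        then show ?thesis using False by simp
      qed
    qed
  qed
qed

lemma margin_add_voter_close:
  assumes "is_profile P" "j \<notin> voters P" "strict_weak_order_on (alts P) L" "x \<in> alts P" "y \<in> alts P"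
  shows "\<bar>margin (add_voter P j L) x y - margin P x y\<bar> \<le> 1"
proof -
  have "finite (voters P)" using assms(1) by (simp add: is_profile_def)
  then have "margin (add_voter P j L) x y = margin P x y + dl L x y"
    using margin_add_voter[OF _ assms(2)] by blast
  moreover have "\<not> ((x, y) \<in> L \<and> (y, x) \<in> L)"
    using assms(3-5) unfolding strict_weak_order_on_def by blast
  ultimately show ?thesis by (auto simp: dl_def)
qed

lemma svr_unique:
  assumes vm: "voting_method F" and svr: "single_voter_resolvable F" and omi: "ordinal_margin_invariant F"
    and P: "is_profile P" and g: "gen 3 (margin P) (alts P)"
  shows "card (F P) \<le> 1"
proof (rule ccontr)
  assume "\<not> card (F P) \<le> 1"
  then have "card (F P) > 1" by simp
  then obtain j L where jL: "j \<notin> voters P" "strict_weak_order_on (alts P) L" "card (F (add_voter P j L)) = 1"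
    using svr P unfolding single_voter_resolvable_def by (meson)
  have P': "is_profile (add_voter P j L)"
    using P jL by (auto simp: is_profile_good intro: good_add_voter)
  have "ordinal_margin_graph (add_voter P j L) = ordinal_margin_graph P"
  proof (rule omg_eq_close[OF _ g, where s = 1])
    show "\<forall>x\<in>alts P. \<forall>y\<in>alts P. \<bar>real_of_int (margin (add_voter P j L) x y) - 1 * real_of_int (margin P x y)\<bar> < 1 * real_of_int 3 / 2"
    proof (intro ballI)
      fix x y assume xy: "x \<in> alts P" "y \<in> alts P"
      have "\<bar>margin (add_voter P j L) x y - margin P x y\<bar> \<le> 1"
        using margin_add_voter_close[OF P jL(1) jL(2) xy] .
      then have i1: "margin (add_voter P j L) x y - margin P x y \<le> 1" "margin P x y - margin (add_voter P j L) x y \<le> 1"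
        by (auto simp: abs_le_iff)
      have r1: "real_of_int (margin (add_voter P j L) x y) - real_of_int (margin P x y) \<le> 1"
        using i1(1) by (metis of_int_diff of_int_le_1_iff)
      have r2: "real_of_int (margin P x y) - real_of_int (margin (add_voter P j L) x y) \<le> 1"
        using i1(2) by (metis of_int_diff of_int_le_1_iff)
      have "\<bar>real_of_int (margin (add_voter P j L) x y) - real_of_int (margin P x y)\<bar> \<le> 1"
        using r1 r2 by (simp add: abs_le_iff)
      then show "\<bar>real_of_int (margin (add_voter P j L) x y) - 1 * real_of_int (margin P x y)\<bar> < 1 * real_of_int 3 / 2"
        by simp
    qed
  qed auto
  then have "F (add_voter P j L) = F P"
    using omi[unfolded ordinal_margin_invariant_def, rule_format, OF conjI[OF P' conjI[OF P]]] by blast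
  then show False using jL \<open>card (F P) > 1\<close> by simp
qed


locale four =
  fixes a b c d :: 'x and vv :: "nat \<Rightarrow> 'v"
  assumes dist: "distinct [a, b, c, d]" and injv: "inj vv"
begin

lemma neq[simp]: "a \<noteq> b" "a \<noteq> c" "a \<noteq> d" "b \<noteq> c" "b \<noteq> d" "c \<noteq> d"
  "b \<noteq> a" "c \<noteq> a" "d \<noteq> a" "c \<noteq> b" "d \<noteq> b" "d \<noteq> c"
  using dist by auto

abbreviation "X \<equiv> {a, b, c, d}"

lemma finX: "finite X" and neX: "X \<noteq> {}" by auto

lemma topord:
  assumes "distinct (x # xs)" "set (x # xs) = X"
  shows "strict_weak_order_on X (lin (x # xs)) \<and> (\<forall>y\<in>X - {x}. (x, y) \<in> lin (x # xs))"
  using lin_swo[OF assms(1)] assms by auto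

lemma chain_margin2:
  assumes "inj vv" "Q = mkp vv Y bs"
  shows "margin (addbs vv (tot bs) ch Q) x y = margin Q x y + (\<Sum>(L, k)\<leftarrow>ch. int k * dl L x y)"
  using chain_margin[OF assms(1)] assms(2) by simp

lemma chain_PI1:
  assumes "positive_involvement F" "is_profile (mkp vv Y bs)" "x \<in> F (mkp vv Y bs)"
    "strict_weak_order_on Y L" "\<forall>y\<in>Y - {x}. (x, y) \<in> L" "inj vv"
  shows "x \<in> F (addbs vv (tot bs) [(L, k)] (mkp vv Y bs)) \<and> is_profile (addbs vv (tot bs) [(L, k)] (mkp vv Y bs))"
  by (rule chain_PI[OF assms(1-3) _ assms(6)]) (use assms(4,5) in auto)

lemma linX:
  assumes "distinct xs" "set xs = X"
  shows "strict_weak_order_on X (lin xs)"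
  using lin_swo[OF assms(1)] assms by auto

definition "b_p1 = [(lin [a,b,c,d], 31), (lin [a,c,d,b], 20), (lin [c,b,a,d], 12), (lin [c,d,a,b], 6), (lin [d,b,c,a], 44)]"
definition "p1 = mkp vv X b_p1"
lemma p1_m[simp]:
  "margin p1 a b = 1"
  "margin p1 a c = -11"
  "margin p1 a d = 13"
  "margin p1 b a = -1"
  "margin p1 b c = 37"
  "margin p1 b d = -27"
  "margin p1 c a = 11"
  "margin p1 c b = -37"
  "margin p1 c d = 25"
  "margin p1 d a = -13"
  "margin p1 d b = 27"
  "margin p1 d c = -25"
  unfolding p1_def mkp_margin[OF injv] b_p1_def by (simp_all add: dl_def)
lemma p1_alts[simp]: "alts p1 = X" by (simp add: p1_def)
lemma p1_prof: "is_profile p1"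
  unfolding p1_def b_p1_def by (rule mkp_profile[OF finX neX]) (auto simp del: lin.simps intro!: linX)

definition "b_p2 = [(lin [a,b,c,d], 34), (lin [a,c,d,b], 20), (lin [c,b,a,d], 12), (lin [c,d,a,b], 13), (lin [d,b,c,a], 44)]"
definition "p2 = mkp vv X b_p2"
lemma p2_m[simp]:
  "margin p2 a b = 11"
  "margin p2 a c = -15"
  "margin p2 a d = 9"
  "margin p2 b a = -11"
  "margin p2 b c = 33"
  "margin p2 b d = -31"
  "margin p2 c a = 15"
  "margin p2 c b = -33"
  "margin p2 c d = 35"
  "margin p2 d a = -9"
  "margin p2 d b = 31"
  "margin p2 d c = -35"
  unfolding p2_def mkp_margin[OF injv] b_p2_def by (simp_all add: dl_def)
lemma p2_alts[simp]: "alts p2 = X" by (simp add: p2_def)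
lemma p2_prof: "is_profile p2"
  unfolding p2_def b_p2_def by (rule mkp_profile[OF finX neX]) (auto simp del: lin.simps intro!: linX)

definition "b_q2 = [(lin [a,b,c,d], 39), (lin [c,a,d,b], 13), (lin [c,d,b,a], 22), (lin [d,a,c,b], 3), (lin [d,b,c,a], 26)]"
definition "q2 = mkp vv X b_q2"
lemma q2_m[simp]:
  "margin q2 a b = 7"
  "margin q2 a c = -19"
  "margin q2 a d = 1"
  "margin q2 b a = -7"
  "margin q2 b c = 27"
  "margin q2 b d = -25"
  "margin q2 c a = 19"
  "margin q2 c b = -27"
  "margin q2 c d = 45"
  "margin q2 d a = -1"
  "margin q2 d b = 25"
  "margin q2 d c = -45"
  unfolding q2_def mkp_margin[OF injv] b_q2_def by (simp_all add: dl_def)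
lemma q2_alts[simp]: "alts q2 = X" by (simp add: q2_def)
lemma q2_prof: "is_profile q2"
  unfolding q2_def b_q2_def by (rule mkp_profile[OF finX neX]) (auto simp del: lin.simps intro!: linX)

definition "b_p5 = [(lin [a,d,b,c], 16), (lin [b,a,c,d], 36), (lin [c,d,a,b], 38), (lin [d,a,b,c], 1), (lin [d,b,c,a], 20)]"
definition "p5 = mkp vv X b_p5"
lemma p5_m[simp]:
  "margin p5 a b = -1"
  "margin p5 a c = -5"
  "margin p5 a d = -7"
  "margin p5 b a = 1"
  "margin p5 b c = 35"
  "margin p5 b d = -39"
  "margin p5 c a = 5"
  "margin p5 c b = -35"
  "margin p5 c d = 37"
  "margin p5 d a = 7"
  "margin p5 d b = 39"
  "margin p5 d c = -37"
  unfolding p5_def mkp_margin[OF injv] b_p5_def by (simp_all add: dl_def)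
lemma p5_alts[simp]: "alts p5 = X" by (simp add: p5_def)
lemma p5_prof: "is_profile p5"
  unfolding p5_def b_p5_def by (rule mkp_profile[OF finX neX]) (auto simp del: lin.simps intro!: linX)

definition "p4a = addbs vv (tot b_p1) [(lin [a,b,c,d], 3)] p1"
lemma p4a_alts[simp]: "alts p4a = X" by (simp add: p4a_def p1_def)
lemma p4a_m[simp]:
  "margin p4a a b = 4"
  "margin p4a a c = -8"
  "margin p4a a d = 16"
  "margin p4a b a = -4"
  "margin p4a b c = 40"
  "margin p4a b d = -24"
  "margin p4a c a = 8"
  "margin p4a c b = -40"
  "margin p4a c d = 28"
  "margin p4a d a = -16"
  "margin p4a d b = 24"
  "margin p4a d c = -28"
  unfolding p4a_def chain_margin2[OF injv p1_def] by (simp_all add: dl_def)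
lemma p4a_PI: "a \<in> F p1 \<Longrightarrow> positive_involvement F \<Longrightarrow> a \<in> F p4a \<and> is_profile p4a"
proof -
  have "strict_weak_order_on X (lin [a,b,c,d]) \<and> (\<forall>y\<in>X - {a}. (a, y) \<in> lin [a,b,c,d])"
    by (rule topord) auto
  assume "a \<in> F p1" "positive_involvement F"
  then show ?thesis
    unfolding p4a_def using p1_prof unfolding p1_def
    by (intro chain_PI1[OF _ _ _ _ _ injv]) (use \<open>strict_weak_order_on X _ \<and> _\<close> in auto)
qed

definition "p4b = addbs vv (tot b_p2) [(lin [b,a,d,c], 7)] p2"
lemma p4b_alts[simp]: "alts p4b = X" by (simp add: p4b_def p2_def)
lemma p4b_m[simp]:
  "margin p4b a b = 4"
  "margin p4b a c = -8"
  "margin p4b a d = 16"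
  "margin p4b b a = -4"
  "margin p4b b c = 40"
  "margin p4b b d = -24"
  "margin p4b c a = 8"
  "margin p4b c b = -40"
  "margin p4b c d = 28"
  "margin p4b d a = -16"
  "margin p4b d b = 24"
  "margin p4b d c = -28"
  unfolding p4b_def chain_margin2[OF injv p2_def] by (simp_all add: dl_def)
lemma p4b_PI: "b \<in> F p2 \<Longrightarrow> positive_involvement F \<Longrightarrow> b \<in> F p4b \<and> is_profile p4b"
proof -
  have "strict_weak_order_on X (lin [b,a,d,c]) \<and> (\<forall>y\<in>X - {b}. (b, y) \<in> lin [b,a,d,c])"
    by (rule topord) auto
  assume "b \<in> F p2" "positive_involvement F"
  then show ?thesis
    unfolding p4b_def using p2_prof unfolding p2_def
    by (intro chain_PI1[OF _ _ _ _ _ injv]) (use \<open>strict_weak_order_on X _ \<and> _\<close> in auto)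
qed

definition "p3a = addbs vv (tot b_q2) [(lin [a,c,d,b], 3)] q2"
lemma p3a_alts[simp]: "alts p3a = X" by (simp add: p3a_def q2_def)
lemma p3a_m[simp]:
  "margin p3a a b = 10"
  "margin p3a a c = -16"
  "margin p3a a d = 4"
  "margin p3a b a = -10"
  "margin p3a b c = 24"
  "margin p3a b d = -28"
  "margin p3a c a = 16"
  "margin p3a c b = -24"
  "margin p3a c d = 48"
  "margin p3a d a = -4"
  "margin p3a d b = 28"
  "margin p3a d c = -48"
  unfolding p3a_def chain_margin2[OF injv q2_def] by (simp_all add: dl_def)
lemma p3a_PI: "a \<in> F q2 \<Longrightarrow> positive_involvement F \<Longrightarrow> a \<in> F p3a \<and> is_profile p3a"
proof -
  have "strict_weak_order_on X (lin [a,c,d,b]) \<and> (\<forall>y\<in>X - {a}. (a, y) \<in> lin [a,c,d,b])"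
    by (rule topord) auto
  assume "a \<in> F q2" "positive_involvement F"
  then show ?thesis
    unfolding p3a_def using q2_prof unfolding q2_def
    by (intro chain_PI1[OF _ _ _ _ _ injv]) (use \<open>strict_weak_order_on X _ \<and> _\<close> in auto)
qed

definition "p3c = addbs vv (tot b_p5) [(lin [c,a,b,d], 11)] p5"
lemma p3c_alts[simp]: "alts p3c = X" by (simp add: p3c_def p5_def)
lemma p3c_m[simp]:
  "margin p3c a b = 10"
  "margin p3c a c = -16"
  "margin p3c a d = 4"
  "margin p3c b a = -10"
  "margin p3c b c = 24"
  "margin p3c b d = -28"
  "margin p3c c a = 16"
  "margin p3c c b = -24"
  "margin p3c c d = 48"
  "margin p3c d a = -4"
  "margin p3c d b = 28"
  "margin p3c d c = -48"
  unfolding p3c_def chain_margin2[OF injv p5_def] by (simp_all add: dl_def)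
lemma p3c_PI: "c \<in> F p5 \<Longrightarrow> positive_involvement F \<Longrightarrow> c \<in> F p3c \<and> is_profile p3c"
proof -
  have "strict_weak_order_on X (lin [c,a,b,d]) \<and> (\<forall>y\<in>X - {c}. (c, y) \<in> lin [c,a,b,d])"
    by (rule topord) auto
  assume "c \<in> F p5" "positive_involvement F"
  then show ?thesis
    unfolding p3c_def using p5_prof unfolding p5_def
    by (intro chain_PI1[OF _ _ _ _ _ injv]) (use \<open>strict_weak_order_on X _ \<and> _\<close> in auto)
qed

definition "e1b = addbs vv (tot b_p1) [(lin [b,d,a,c], 26)] p1"
lemma e1b_alts[simp]: "alts e1b = X" by (simp add: e1b_def p1_def)
lemma e1b_m[simp]:
  "margin e1b a b = -25"
  "margin e1b a c = 15"
  "margin e1b a d = -13"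
  "margin e1b b a = 25"
  "margin e1b b c = 63"
  "margin e1b b d = -1"
  "margin e1b c a = -15"
  "margin e1b c b = -63"
  "margin e1b c d = -1"
  "margin e1b d a = 13"
  "margin e1b d b = 1"
  "margin e1b d c = 1"
  unfolding e1b_def chain_margin2[OF injv p1_def] by (simp_all add: dl_def)
lemma e1b_PI: "b \<in> F p1 \<Longrightarrow> positive_involvement F \<Longrightarrow> b \<in> F e1b \<and> is_profile e1b"
proof -
  have "strict_weak_order_on X (lin [b,d,a,c]) \<and> (\<forall>y\<in>X - {b}. (b, y) \<in> lin [b,d,a,c])"
    by (rule topord) auto
  assume "b \<in> F p1" "positive_involvement F"
  then show ?thesis
    unfolding e1b_def using p1_prof unfolding p1_def
    by (intro chain_PI1[OF _ _ _ _ _ injv]) (use \<open>strict_weak_order_on X _ \<and> _\<close> in auto)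
qed

definition "e1c = addbs vv (tot b_p1) [(lin [c,b,a,d], 28)] p1"
lemma e1c_alts[simp]: "alts e1c = X" by (simp add: e1c_def p1_def)
lemma e1c_m[simp]:
  "margin e1c a b = -27"
  "margin e1c a c = -39"
  "margin e1c a d = 41"
  "margin e1c b a = 27"
  "margin e1c b c = 9"
  "margin e1c b d = 1"
  "margin e1c c a = 39"
  "margin e1c c b = -9"
  "margin e1c c d = 53"
  "margin e1c d a = -41"
  "margin e1c d b = -1"
  "margin e1c d c = -53"
  unfolding e1c_def chain_margin2[OF injv p1_def] by (simp_all add: dl_def)
lemma e1c_PI: "c \<in> F p1 \<Longrightarrow> positive_involvement F \<Longrightarrow> c \<in> F e1c \<and> is_profile e1c"
proof -
  have "strict_weak_order_on X (lin [c,b,a,d]) \<and> (\<forall>y\<in>X - {c}. (c, y) \<in> lin [c,b,a,d])"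
    by (rule topord) auto
  assume "c \<in> F p1" "positive_involvement F"
  then show ?thesis
    unfolding e1c_def using p1_prof unfolding p1_def
    by (intro chain_PI1[OF _ _ _ _ _ injv]) (use \<open>strict_weak_order_on X _ \<and> _\<close> in auto)
qed

definition "e1d = addbs vv (tot b_p1) [(lin [d,a,b,c], 12)] p1"
lemma e1d_alts[simp]: "alts e1d = X" by (simp add: e1d_def p1_def)
lemma e1d_m[simp]:
  "margin e1d a b = 13"
  "margin e1d a c = 1"
  "margin e1d a d = 1"
  "margin e1d b a = -13"
  "margin e1d b c = 49"
  "margin e1d b d = -39"
  "margin e1d c a = -1"
  "margin e1d c b = -49"
  "margin e1d c d = 13"
  "margin e1d d a = -1"
  "margin e1d d b = 39"
  "margin e1d d c = -13"
  unfolding e1d_def chain_margin2[OF injv p1_def] by (simp_all add: dl_def)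
lemma e1d_PI: "d \<in> F p1 \<Longrightarrow> positive_involvement F \<Longrightarrow> d \<in> F e1d \<and> is_profile e1d"
proof -
  have "strict_weak_order_on X (lin [d,a,b,c]) \<and> (\<forall>y\<in>X - {d}. (d, y) \<in> lin [d,a,b,c])"
    by (rule topord) auto
  assume "d \<in> F p1" "positive_involvement F"
  then show ?thesis
    unfolding e1d_def using p1_prof unfolding p1_def
    by (intro chain_PI1[OF _ _ _ _ _ injv]) (use \<open>strict_weak_order_on X _ \<and> _\<close> in auto)
qed

definition "e2c = addbs vv (tot b_p2) [(lin [c,b,a,d], 32)] p2"
lemma e2c_alts[simp]: "alts e2c = X" by (simp add: e2c_def p2_def)
lemma e2c_m[simp]:
  "margin e2c a b = -21"
  "margin e2c a c = -47"
  "margin e2c a d = 41"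
  "margin e2c b a = 21"
  "margin e2c b c = 1"
  "margin e2c b d = 1"
  "margin e2c c a = 47"
  "margin e2c c b = -1"
  "margin e2c c d = 67"
  "margin e2c d a = -41"
  "margin e2c d b = -1"
  "margin e2c d c = -67"
  unfolding e2c_def chain_margin2[OF injv p2_def] by (simp_all add: dl_def)
lemma e2c_PI: "c \<in> F p2 \<Longrightarrow> positive_involvement F \<Longrightarrow> c \<in> F e2c \<and> is_profile e2c"
proof -
  have "strict_weak_order_on X (lin [c,b,a,d]) \<and> (\<forall>y\<in>X - {c}. (c, y) \<in> lin [c,b,a,d])"
    by (rule topord) auto
  assume "c \<in> F p2" "positive_involvement F"
  then show ?thesis
    unfolding e2c_def using p2_prof unfolding p2_def
    by (intro chain_PI1[OF _ _ _ _ _ injv]) (use \<open>strict_weak_order_on X _ \<and> _\<close> in auto)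
qed

definition "e2d = addbs vv (tot b_p2) [(lin [d,c,a,b], 34)] p2"
lemma e2d_alts[simp]: "alts e2d = X" by (simp add: e2d_def p2_def)
lemma e2d_m[simp]:
  "margin e2d a b = 45"
  "margin e2d a c = -49"
  "margin e2d a d = -25"
  "margin e2d b a = -45"
  "margin e2d b c = -1"
  "margin e2d b d = -65"
  "margin e2d c a = 49"
  "margin e2d c b = 1"
  "margin e2d c d = 1"
  "margin e2d d a = 25"
  "margin e2d d b = 65"
  "margin e2d d c = -1"
  unfolding e2d_def chain_margin2[OF injv p2_def] by (simp_all add: dl_def)
lemma e2d_PI: "d \<in> F p2 \<Longrightarrow> positive_involvement F \<Longrightarrow> d \<in> F e2d \<and> is_profile e2d"
proof -
  have "strict_weak_order_on X (lin [d,c,a,b]) \<and> (\<forall>y\<in>X - {d}. (d, y) \<in> lin [d,c,a,b])"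
    by (rule topord) auto
  assume "d \<in> F p2" "positive_involvement F"
  then show ?thesis
    unfolding e2d_def using p2_prof unfolding p2_def
    by (intro chain_PI1[OF _ _ _ _ _ injv]) (use \<open>strict_weak_order_on X _ \<and> _\<close> in auto)
qed

definition "e5b = addbs vv (tot b_p5) [(lin [b,d,a,c], 38)] p5"
lemma e5b_alts[simp]: "alts e5b = X" by (simp add: e5b_def p5_def)
lemma e5b_m[simp]:
  "margin e5b a b = -39"
  "margin e5b a c = 33"
  "margin e5b a d = -45"
  "margin e5b b a = 39"
  "margin e5b b c = 73"
  "margin e5b b d = -1"
  "margin e5b c a = -33"
  "margin e5b c b = -73"
  "margin e5b c d = -1"
  "margin e5b d a = 45"
  "margin e5b d b = 1"
  "margin e5b d c = 1"
  unfolding e5b_def chain_margin2[OF injv p5_def] by (simp_all add: dl_def)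
lemma e5b_PI: "b \<in> F p5 \<Longrightarrow> positive_involvement F \<Longrightarrow> b \<in> F e5b \<and> is_profile e5b"
proof -
  have "strict_weak_order_on X (lin [b,d,a,c]) \<and> (\<forall>y\<in>X - {b}. (b, y) \<in> lin [b,d,a,c])"
    by (rule topord) auto
  assume "b \<in> F p5" "positive_involvement F"
  then show ?thesis
    unfolding e5b_def using p5_prof unfolding p5_def
    by (intro chain_PI1[OF _ _ _ _ _ injv]) (use \<open>strict_weak_order_on X _ \<and> _\<close> in auto)
qed

definition "e5d = addbs vv (tot b_p5) [(lin [d,c,a,b], 36)] p5"
lemma e5d_alts[simp]: "alts e5d = X" by (simp add: e5d_def p5_def)
lemma e5d_m[simp]:
  "margin e5d a b = 35"
  "margin e5d a c = -41"
  "margin e5d a d = -43"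
  "margin e5d b a = -35"
  "margin e5d b c = -1"
  "margin e5d b d = -75"
  "margin e5d c a = 41"
  "margin e5d c b = 1"
  "margin e5d c d = 1"
  "margin e5d d a = 43"
  "margin e5d d b = 75"
  "margin e5d d c = -1"
  unfolding e5d_def chain_margin2[OF injv p5_def] by (simp_all add: dl_def)
lemma e5d_PI: "d \<in> F p5 \<Longrightarrow> positive_involvement F \<Longrightarrow> d \<in> F e5d \<and> is_profile e5d"
proof -
  have "strict_weak_order_on X (lin [d,c,a,b]) \<and> (\<forall>y\<in>X - {d}. (d, y) \<in> lin [d,c,a,b])"
    by (rule topord) auto
  assume "d \<in> F p5" "positive_involvement F"
  then show ?thesis
    unfolding e5d_def using p5_prof unfolding p5_def
    by (intro chain_PI1[OF _ _ _ _ _ injv]) (use \<open>strict_weak_order_on X _ \<and> _\<close> in auto)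
qed

end

lemma excl_cw:
  assumes "condorcet_winner_criterion F" "is_profile Q" "x \<in> F Q" "condorcet_winner Q y" "x \<noteq> y"
  shows False
proof -
  have "F Q = {y}" using assms(1,2,4) unfolding condorcet_winner_criterion_def by blast
  then show False using assms(3,5) by simp
qed

lemma omg_eq_margins:
  assumes "alts P' = alts P" "\<forall>x\<in>alts P. \<forall>y\<in>alts P. margin P' x y = margin P x y"
  shows "ordinal_margin_graph P' = ordinal_margin_graph P"
  by (rule omg_eq_order[OF assms(1)]) (use assms(2) in auto)

lemma omi_eq:
  assumes "ordinal_margin_invariant F" "is_profile P" "is_profile P'" "ordinal_margin_graph P = ordinal_margin_graph P'"
  shows "F P = F P'"
  using assms(1)[unfolded ordinal_margin_invariant_def, rule_format, OF conjI[OF assms(2) conjI[OF assms(3) assms(4)]]] .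

context four
begin

lemma winner_in_X:
  assumes "voting_method F" "is_profile Q" "alts Q = X"
  obtains z where "z \<in> F Q" "z = a \<or> z = b \<or> z = c \<or> z = d"
proof -
  have "F Q \<noteq> {}" "F Q \<subseteq> alts Q" using assms(1,2) unfolding voting_method_def by blast+
  then obtain z where "z \<in> F Q" "z \<in> X" using assms(3) by blast
  then show ?thesis using that by blast
qed

lemma p1_a:
  assumes vm: "voting_method F" and PI: "positive_involvement F" and CW: "condorcet_winner_criterion F"
  shows "a \<in> F p1"
proof -
  obtain z where z: "z \<in> F p1" "z = a \<or> z = b \<or> z = c \<or> z = d"
    using winner_in_X[OF vm p1_prof p1_alts] by blast
  have "z \<noteq> b"
  proof
    assume "z = b"
    then have "b \<in> F e1b \<and> is_profile e1b" using e1b_PI z PI by blast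
    moreover have "condorcet_winner e1b d" by (auto simp: condorcet_winner_def)
    ultimately show False using excl_cw[OF CW, of e1b b d] by simp
  qed
  moreover have "z \<noteq> c"
  proof
    assume "z = c"
    then have "c \<in> F e1c \<and> is_profile e1c" using e1c_PI z PI by blast
    moreover have "condorcet_winner e1c b" by (auto simp: condorcet_winner_def)
    ultimately show False using excl_cw[OF CW, of e1c c b] by simp
  qed
  moreover have "z \<noteq> d"
  proof
    assume "z = d"
    then have "d \<in> F e1d \<and> is_profile e1d" using e1d_PI z PI by blast
    moreover have "condorcet_winner e1d a" by (auto simp: condorcet_winner_def)
    ultimately show False using excl_cw[OF CW, of e1d d a] by simp
  qed
  ultimately show ?thesis using z by auto
qed

lemma p5_c:
  assumes vm: "voting_method F" and PI: "positive_involvement F" and CW: "condorcet_winner_criterion F"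
    and CL: "condorcet_loser_criterion F"
  shows "c \<in> F p5"
proof -
  obtain z where z: "z \<in> F p5" "z = a \<or> z = b \<or> z = c \<or> z = d"
    using winner_in_X[OF vm p5_prof p5_alts] by blast
  have "z \<noteq> a"
  proof
    assume "z = a"
    have "condorcet_loser p5 a" by (auto simp: condorcet_loser_def)
    then have "a \<notin> F p5" using CL p5_prof unfolding condorcet_loser_criterion_def by blast
    then show False using z \<open>z = a\<close> by simp
  qed
  moreover have "z \<noteq> b"
  proof
    assume "z = b"
    then have "b \<in> F e5b \<and> is_profile e5b" using e5b_PI z PI by blast
    moreover have "condorcet_winner e5b d" by (auto simp: condorcet_winner_def)
    ultimately show False using excl_cw[OF CW, of e5b b d] by simp
  qed
  moreover have "z \<noteq> d"
  proof
    assume "z = d"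
    then have "d \<in> F e5d \<and> is_profile e5d" using e5d_PI z PI by blast
    moreover have "condorcet_winner e5d c" by (auto simp: condorcet_winner_def)
    ultimately show False using excl_cw[OF CW, of e5d d c] by simp
  qed
  ultimately show ?thesis using z by auto
qed

lemma p2_ab:
  assumes vm: "voting_method F" and PI: "positive_involvement F" and CW: "condorcet_winner_criterion F"
  obtains "a \<in> F p2" | "b \<in> F p2"
proof -
  obtain z where z: "z \<in> F p2" "z = a \<or> z = b \<or> z = c \<or> z = d"
    using winner_in_X[OF vm p2_prof p2_alts] by blast
  have "z \<noteq> c"
  proof
    assume "z = c"
    then have "c \<in> F e2c \<and> is_profile e2c" using e2c_PI z PI by blast
    moreover have "condorcet_winner e2c b" by (auto simp: condorcet_winner_def)
    ultimately show False using excl_cw[OF CW, of e2c c b] by simp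
  qed
  moreover have "z \<noteq> d"
  proof
    assume "z = d"
    then have "d \<in> F e2d \<and> is_profile e2d" using e2d_PI z PI by blast
    moreover have "condorcet_winner e2d c" by (auto simp: condorcet_winner_def)
    ultimately show False using excl_cw[OF CW, of e2d d c] by simp
  qed
  ultimately show ?thesis using z that by auto
qed

lemma omg_p2_q2: "ordinal_margin_graph p2 = ordinal_margin_graph q2"
  by (rule omg_eq_order) simp_all

lemma omg_p4: "ordinal_margin_graph p4b = ordinal_margin_graph p4a"
  by (rule omg_eq_margins) simp_all

lemma omg_p3: "ordinal_margin_graph p3a = ordinal_margin_graph p3c"
  by (rule omg_eq_margins) simp_all

lemma gen_p4a: "gen 3 (margin p4a) (alts p4a)"
  unfolding gen_def by simp

lemma gen_p3c: "gen 3 (margin p3c) (alts p3c)"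
  unfolding gen_def by simp

lemma key:
  assumes vm: "voting_method F" and PI: "positive_involvement F" and CW: "condorcet_winner_criterion F"
    and CL: "condorcet_loser_criterion F" and omi: "ordinal_margin_invariant F"
  shows "card (F p4a) > 1 \<or> card (F p3c) > 1"
proof -
  have A: "a \<in> F p4a \<and> is_profile p4a" using p4a_PI p1_a[OF vm PI CW] PI by blast
  have C: "c \<in> F p3c \<and> is_profile p3c" using p3c_PI p5_c[OF vm PI CW CL] PI by blast
  have fin4: "finite (F p4a)"
  proof -
    have "F p4a \<subseteq> alts p4a" using vm A unfolding voting_method_def by blast
    then show ?thesis using finite_subset finX by auto
  qed
  have fin3: "finite (F p3c)"
  proof -
    have "F p3c \<subseteq> alts p3c" using vm C unfolding voting_method_def by blast
    then show ?thesis using finite_subset finX by auto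
  qed
  have two: "card S > 1" if "finite S" "u \<in> S" "w \<in> S" "u \<noteq> w" for S and u w :: 'x
  proof -
    have "{u, w} \<subseteq> S" using that by auto
    then have "card {u, w} \<le> card S" using that(1) by (rule card_mono[rotated])
    then show ?thesis using that(4) by simp
  qed
  show ?thesis
  proof (rule p2_ab[OF vm PI CW])
    assume "a \<in> F p2"
    then have "a \<in> F q2" using omi_eq[OF omi p2_prof q2_prof omg_p2_q2] by simp
    then have "a \<in> F p3a \<and> is_profile p3a" using p3a_PI PI by blast
    then have "a \<in> F p3c" using omi_eq[OF omi _ _ omg_p3] C by blast
    then show ?thesis using two[OF fin3 _ _ neq(2)] C by blast
  next
    assume "b \<in> F p2"
    then have "b \<in> F p4b \<and> is_profile p4b" using p4b_PI PI by blast
    then have "b \<in> F p4a" using omi_eq[OF omi _ _ omg_p4] A by blast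
    then show ?thesis using two[OF fin4 _ _ neq(1)] A by blast
  qed
qed

end

lemma pi_pair:
  fixes q g :: "'r \<Rightarrow> real"
  assumes V: "finite V" and Os: "finite Os" and i: "i \<in> V" and j: "j \<in> V" and q1: "(\<Sum>r\<in>Os. q r) = 1"
  shows "(\<Sum>pp\<in>PiE V (\<lambda>_. Os). (\<Prod>k\<in>V. q (pp k)) * (g (pp i) * g (pp j))) =
         (if i = j then (\<Sum>r\<in>Os. q r * (g r * g r)) else (\<Sum>r\<in>Os. q r * g r) * (\<Sum>r\<in>Os. q r * g r))"
proof -
  define f where "f k r = q r * (if k = i then g r else 1) * (if k = j then g r else 1)" for k r
  have lhs: "(\<Prod>k\<in>V. f k (pp k)) = (\<Prod>k\<in>V. q (pp k)) * (g (pp i) * g (pp j))" for pp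
  proof -
    have "(\<Prod>k\<in>V. f k (pp k)) = (\<Prod>k\<in>V. q (pp k)) * (\<Prod>k\<in>V. if k = i then g (pp k) else 1) * (\<Prod>k\<in>V. if k = j then g (pp k) else 1)"
      unfolding f_def by (simp add: prod.distrib)
    also have "\<dots> = (\<Prod>k\<in>V. q (pp k)) * (g (pp i) * g (pp j))"
      using V i j by simp
    finally show ?thesis .
  qed
  have "(\<Sum>pp\<in>PiE V (\<lambda>_. Os). (\<Prod>k\<in>V. q (pp k)) * (g (pp i) * g (pp j))) = (\<Sum>pp\<in>PiE V (\<lambda>_. Os). \<Prod>k\<in>V. f k (pp k))"
    by (simp add: lhs)
  also have "\<dots> = (\<Prod>k\<in>V. \<Sum>r\<in>Os. f k r)" using prod_sum_PiE[of V "\<lambda>_. Os" f] V Os by simp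
  also have "\<dots> = (if i = j then (\<Sum>r\<in>Os. q r * (g r * g r)) else (\<Sum>r\<in>Os. q r * g r) * (\<Sum>r\<in>Os. q r * g r))"
  proof (cases "i = j")
    case True
    have "(\<Sum>r\<in>Os. f k r) = (if k = i then (\<Sum>r\<in>Os. q r * (g r * g r)) else 1)" for k
      using True q1 by (simp add: f_def mult.assoc)
    then show ?thesis using True V i by simp
  next
    case False
    have "(\<Sum>r\<in>Os. f k r) = (if k = i then (\<Sum>r\<in>Os. q r * g r) else 1) * (if k = j then (\<Sum>r\<in>Os. q r * g r) else 1)" for k
      using False q1 by (simp add: f_def)
    then have "(\<Prod>k\<in>V. \<Sum>r\<in>Os. f k r) = (\<Prod>k\<in>V. if k = i then (\<Sum>r\<in>Os. q r * g r) else 1) * (\<Prod>k\<in>V. if k = j then (\<Sum>r\<in>Os. q r * g r) else 1)"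
      by (simp add: prod.distrib)
    then show ?thesis using False V i j by simp
  qed
  finally show ?thesis .
qed

lemma pi_tot:
  fixes q :: "'r \<Rightarrow> real"
  assumes V: "finite V" and Os: "finite Os" and q1: "(\<Sum>r\<in>Os. q r) = 1"
  shows "(\<Sum>pp\<in>PiE V (\<lambda>_. Os). (\<Prod>k\<in>V. q (pp k))) = 1"
  using prod_sum_PiE[of V "\<lambda>_. Os" "\<lambda>_. q"] V Os q1 by simp

lemma pi_var:
  fixes q g :: "'r \<Rightarrow> real"
  assumes V: "finite V" and Os: "finite Os" and q1: "(\<Sum>r\<in>Os. q r) = 1" and g0: "(\<Sum>r\<in>Os. q r * g r) = 0"
  shows "(\<Sum>pp\<in>PiE V (\<lambda>_. Os). (\<Prod>k\<in>V. q (pp k)) * (\<Sum>i\<in>V. g (pp i))\<^sup>2) = real (card V) * (\<Sum>r\<in>Os. q r * (g r * g r))"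
proof -
  have "(\<Sum>pp\<in>PiE V (\<lambda>_. Os). (\<Prod>k\<in>V. q (pp k)) * (\<Sum>i\<in>V. g (pp i))\<^sup>2)
      = (\<Sum>pp\<in>PiE V (\<lambda>_. Os). \<Sum>i\<in>V. \<Sum>j\<in>V. (\<Prod>k\<in>V. q (pp k)) * (g (pp i) * g (pp j)))"
    by (intro sum.cong refl) (simp only: power2_eq_square sum_product, simp only: sum_distrib_left)
  also have "\<dots> = (\<Sum>i\<in>V. \<Sum>j\<in>V. \<Sum>pp\<in>PiE V (\<lambda>_. Os). (\<Prod>k\<in>V. q (pp k)) * (g (pp i) * g (pp j)))"
    by (simp add: sum.swap[of _ "PiE V (\<lambda>_. Os)"] sum.swap[of _ "PiE V (\<lambda>_. Os)" V])
  also have "\<dots> = (\<Sum>i\<in>V. \<Sum>j\<in>V. if i = j then (\<Sum>r\<in>Os. q r * (g r * g r)) else 0)"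
    by (intro sum.cong refl) (simp add: pi_pair[OF V Os _ _ q1] g0)
  also have "\<dots> = real (card V) * (\<Sum>r\<in>Os. q r * (g r * g r))"
    using V by simp
  finally show ?thesis .
qed

lemma pi_cheb:
  fixes q g :: "'r \<Rightarrow> real"
  assumes V: "finite V" and Os: "finite Os" and q1: "(\<Sum>r\<in>Os. q r) = 1" and g0: "(\<Sum>r\<in>Os. q r * g r) = 0"
    and qnn: "\<forall>r\<in>Os. q r \<ge> 0" and t: "t > 0"
  shows "(\<Sum>pp\<in>{pp\<in>PiE V (\<lambda>_. Os). t \<le> \<bar>\<Sum>i\<in>V. g (pp i)\<bar>}. (\<Prod>k\<in>V. q (pp k))) \<le> real (card V) * (\<Sum>r\<in>Os. q r * (g r * g r)) / t\<^sup>2"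
proof -
  let ?Q = "\<lambda>pp. (\<Prod>k\<in>V. q (pp k))"
  let ?S = "\<lambda>pp. (\<Sum>i\<in>V. g (pp i))"
  have Qnn: "?Q pp \<ge> 0" if "pp \<in> PiE V (\<lambda>_. Os)" for pp
    using that qnn by (intro prod_nonneg) auto
  have fin: "finite (PiE V (\<lambda>_. Os))" using V Os by (simp add: finite_PiE)
  have "(\<Sum>pp\<in>{pp\<in>PiE V (\<lambda>_. Os). t \<le> \<bar>?S pp\<bar>}. ?Q pp) \<le> (\<Sum>pp\<in>{pp\<in>PiE V (\<lambda>_. Os). t \<le> \<bar>?S pp\<bar>}. ?Q pp * ((?S pp)\<^sup>2 / t\<^sup>2))"
  proof (rule sum_mono)
    fix pp assume p: "pp \<in> {pp\<in>PiE V (\<lambda>_. Os). t \<le> \<bar>?S pp\<bar>}"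
    have "t\<^sup>2 \<le> (?S pp)\<^sup>2" using p t by (simp add: abs_le_square_iff[symmetric]) 
    then have "1 \<le> (?S pp)\<^sup>2 / t\<^sup>2" using t by simp
    then show "?Q pp \<le> ?Q pp * ((?S pp)\<^sup>2 / t\<^sup>2)" using Qnn p
      by (metis (no_types, lifting) mem_Collect_eq mult.right_neutral mult_left_mono)
  qed
  also have "\<dots> \<le> (\<Sum>pp\<in>PiE V (\<lambda>_. Os). ?Q pp * ((?S pp)\<^sup>2 / t\<^sup>2))"
    using fin Qnn by (intro sum_mono2) auto
  also have "\<dots> = (\<Sum>pp\<in>PiE V (\<lambda>_. Os). ?Q pp * (?S pp)\<^sup>2) / t\<^sup>2"
    by (simp add: sum_divide_distrib)
  also have "\<dots> = real (card V) * (\<Sum>r\<in>Os. q r * (g r * g r)) / t\<^sup>2"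
    using pi_var[OF V Os q1 g0] by simp
  finally show ?thesis .
qed


lemma var_le:
  fixes q h :: "'r \<Rightarrow> real"
  assumes "finite Os" "(\<Sum>r\<in>Os. q r) = 1" "\<forall>r\<in>Os. q r \<ge> 0"
  shows "(\<Sum>r\<in>Os. q r * ((h r - (\<Sum>r\<in>Os. q r * h r)) * (h r - (\<Sum>r\<in>Os. q r * h r)))) \<le> (\<Sum>r\<in>Os. q r * (h r * h r))"
proof -
  define \<mu> where "\<mu> = (\<Sum>r\<in>Os. q r * h r)"
  have "(\<Sum>r\<in>Os. q r * ((h r - \<mu>) * (h r - \<mu>))) = (\<Sum>r\<in>Os. q r * (h r * h r)) - 2 * \<mu> * (\<Sum>r\<in>Os. q r * h r) + \<mu> * \<mu> * (\<Sum>r\<in>Os. q r)"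
    by (simp add: algebra_simps sum.distrib sum_subtractf sum_distrib_left)
  also have "\<dots> = (\<Sum>r\<in>Os. q r * (h r * h r)) - \<mu> * \<mu>"
    using assms(2) by (simp add: \<mu>_def)
  also have "\<dots> \<le> (\<Sum>r\<in>Os. q r * (h r * h r))" by simp
  finally show ?thesis by (simp add: \<mu>_def)
qed

lemma aux_frac:
  fixes N P k :: real assumes "N > 0" "P \<ge> 0" "k = 4 * N * (P + 1)"
  shows "P * (4 * N * N / (k * k)) \<le> 1 / 4"
proof -
  have k0: "k * k > 0" using assms by simp
  have "0 \<le> P * P" by simp
  then have "P \<le> (P + 1) * (P + 1)" using assms(2) by (simp add: algebra_simps)
  then have "16 * (N * N) * P \<le> 16 * (N * N) * ((P + 1) * (P + 1))" using assms(1) by (intro mult_left_mono) auto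
  also have "\<dots> = k * k" by (simp add: assms(3) algebra_simps)
  finally have "P * (4 * N * N) \<le> 1 / 4 * (k * k)" by (simp add: algebra_simps)
  then have "P * (4 * N * N) / (k * k) \<le> 1 / 4" using k0 by (simp add: pos_divide_le_eq)
  then show ?thesis by simp
qed

lemma one_plus_le_exp: "1 + (x::real) \<le> exp x"
  using exp_ge_add_one_self by simp

lemma main_est:
  fixes Os :: "'r set" and Ed :: "'e set" and D :: "'e \<Rightarrow> 'r \<Rightarrow> real" and m :: "'r \<Rightarrow> real" and m0 :: "'e \<Rightarrow> real"
  assumes finO: "finite Os" and neO: "Os \<noteq> {}" and finE: "finite Ed"
    and Dbd: "\<forall>e\<in>Ed. \<forall>r\<in>Os. \<bar>D e r\<bar> \<le> 1"
    and Dsum: "\<forall>e\<in>Ed. (\<Sum>r\<in>Os. D e r) = 0"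
    and msum: "(\<Sum>r\<in>Os. m r) = 0"
    and mD: "\<forall>e\<in>Ed. (\<Sum>r\<in>Os. m r * D e r) = m0 e"
  shows "\<exists>\<epsilon>>0. \<exists>n0. \<forall>V::'v set. finite V \<and> n0 \<le> card V \<longrightarrow>
           (\<exists>s>0. \<epsilon> * real (card Os) ^ card V \<le>
              real (card {p \<in> PiE V (\<lambda>_. Os). \<forall>e\<in>Ed. \<bar>(\<Sum>i\<in>V. D e (p i)) - s * m0 e\<bar> < s / 2}))"
proof -
  define N where "N = real (card Os)"
  have N0: "N > 0" using finO neO by (simp add: N_def card_gt_0_iff)
  define u where "u = 1 / N"
  have u0: "u > 0" using N0 by (simp add: u_def)
  define M where "M = 1 + (\<Sum>r\<in>Os. \<bar>m r\<bar>)"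
  have M1: "M \<ge> 1" by (simp add: M_def sum_nonneg)
  have mM: "\<bar>m r\<bar> \<le> M" if "r \<in> Os" for r
  proof -
    have "\<bar>m r\<bar> \<le> (\<Sum>r\<in>Os. \<bar>m r\<bar>)" using that finO by (intro member_le_sum) auto
    then show ?thesis by (simp add: M_def)
  qed
  define A2 where "A2 = u * (\<Sum>r\<in>Os. m r * m r)"
  define P2 where "P2 = real (card Ed)"
  define \<kappa> where "\<kappa> = 4 * N * (P2 + 1)"
  have P20: "P2 \<ge> 0" by (simp add: P2_def)
  have k0: "\<kappa> > 0" using N0 P20 by (simp add: \<kappa>_def)
  define B where "B = \<kappa> * \<kappa> * A2 + 4 * \<kappa> * M"
  define \<epsilon> where "\<epsilon> = exp (- B) / 2"
  define n0 where "n0 = nat \<lceil>4 * \<kappa> * \<kappa> * M * M\<rceil> + 1"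
  have "\<epsilon> > 0" by (simp add: \<epsilon>_def)
  moreover have "\<forall>V::'v set. finite V \<and> n0 \<le> card V \<longrightarrow>
           (\<exists>s>0. \<epsilon> * real (card Os) ^ card V \<le>
              real (card {p \<in> PiE V (\<lambda>_. Os). \<forall>e\<in>Ed. \<bar>(\<Sum>i\<in>V. D e (p i)) - s * m0 e\<bar> < s / 2}))"
  proof (intro allI impI)
    fix V :: "'v set" assume V: "finite V \<and> n0 \<le> card V"
    then have finV: "finite V" by simp
    define n where "n = real (card V)"
    have nbig: "n > 4 * \<kappa> * \<kappa> * M * M"
    proof -
      have "real n0 > 4 * \<kappa> * \<kappa> * M * M" unfolding n0_def by linarith
      then show ?thesis using V by (simp add: n_def)
    qed
    have "4 * \<kappa> * \<kappa> * M * M \<ge> 0" using k0 M1 by simp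
    then have n0': "n > 0" using nbig by linarith
    define \<eta> where "\<eta> = \<kappa> / sqrt n"
    have sq: "sqrt n * sqrt n = n" using n0' by simp
    have eta0: "\<eta> > 0" using k0 n0' by (simp add: \<eta>_def)
    have etan: "\<eta> * \<eta> * n = \<kappa> * \<kappa>" using n0' by (simp add: \<eta>_def field_simps)
    have etaM: "\<eta> * M < 1 / 2"
    proof -
      have "(2 * \<kappa> * M)\<^sup>2 < n" using nbig by (simp add: power2_eq_square algebra_simps)
      then have "2 * \<kappa> * M < sqrt n" by (rule real_less_rsqrt)
      then show ?thesis using n0' k0 M1 by (simp add: \<eta>_def field_simps)
    qed
    define q where "q r = u * (1 + \<eta> * m r)" for r
    have q0: "q r \<ge> u / 2" if "r \<in> Os" for r
    proof -
      have "\<bar>\<eta> * m r\<bar> \<le> \<eta> * M" using mM[OF that] eta0 by (simp add: abs_mult mult_left_mono)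
      then have "1 + \<eta> * m r \<ge> 1 / 2" using etaM by linarith
      then have "u * (1 / 2) \<le> u * (1 + \<eta> * m r)" using u0 by (intro mult_left_mono) auto
      then show ?thesis unfolding q_def by simp
    qed
    have qnn: "\<forall>r\<in>Os. q r \<ge> 0"
    proof
      fix r assume "r \<in> Os"
      then have "q r \<ge> u / 2" by (rule q0)
      then show "q r \<ge> 0" using u0 by linarith
    qed
    have q1: "(\<Sum>r\<in>Os. q r) = 1"
    proof -
      have "(\<Sum>r\<in>Os. q r) = u * (\<Sum>r\<in>Os. 1 + \<eta> * m r)" by (simp add: q_def sum_distrib_left)
      also have "\<dots> = u * (N + \<eta> * (\<Sum>r\<in>Os. m r))" by (simp add: sum.distrib sum_distrib_left N_def)
      also have "\<dots> = 1" using msum N0 by (simp add: u_def)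
      finally show ?thesis .
    qed
    define s where "s = u * \<kappa> * sqrt n"
    have s0: "s > 0" using u0 k0 n0' by (simp add: s_def)
    have nueta: "n * u * \<eta> = s" using n0' sq by (simp add: s_def \<eta>_def field_simps)
    let ?Pi = "PiE V (\<lambda>_. Os)"
    let ?Q = "\<lambda>p. \<Prod>k\<in>V. q (p k)"
    have finPi: "finite ?Pi" using finV finO by (simp add: finite_PiE)
    have Qnn: "?Q p \<ge> 0" if "p \<in> ?Pi" for p using that qnn by (intro prod_nonneg) auto
    define bad where "bad e = {p \<in> ?Pi. s / 2 \<le> \<bar>(\<Sum>i\<in>V. D e (p i)) - s * m0 e\<bar>}" for e
    have badm: "(\<Sum>p\<in>bad e. ?Q p) \<le> 4 * N * N / (\<kappa> * \<kappa>)" if e: "e \<in> Ed" for e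
    proof -
      define c where "c = (\<Sum>r\<in>Os. q r * D e r)"
      define g where "g r = D e r - c" for r
      have qD: "(\<Sum>r\<in>Os. q r * D e r) = u * \<eta> * m0 e"
      proof -
        have "(\<Sum>r\<in>Os. q r * D e r) = u * (\<Sum>r\<in>Os. D e r) + u * \<eta> * (\<Sum>r\<in>Os. m r * D e r)"
          by (simp add: q_def algebra_simps sum.distrib sum_distrib_left)
        then show ?thesis using Dsum mD e by simp
      qed
      have g0: "(\<Sum>r\<in>Os. q r * g r) = 0"
      proof -
        have "(\<Sum>r\<in>Os. q r * g r) = (\<Sum>r\<in>Os. q r * D e r - q r * c)"
          by (simp add: g_def right_diff_distrib)
        also have "\<dots> = (\<Sum>r\<in>Os. q r * D e r) - (\<Sum>r\<in>Os. q r) * c"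
          by (simp add: sum_subtractf sum_distrib_right)
        finally have "(\<Sum>r\<in>Os. q r * g r) = c - (\<Sum>r\<in>Os. q r) * c" by (simp add: c_def)
        then show ?thesis using q1 by simp
      qed
      have g2: "(\<Sum>r\<in>Os. q r * (g r * g r)) \<le> 1"
      proof -
        have "(\<Sum>r\<in>Os. q r * (g r * g r)) \<le> (\<Sum>r\<in>Os. q r * (D e r * D e r))"
          unfolding g_def c_def by (rule var_le[OF finO q1 qnn])
        also have "\<dots> \<le> (\<Sum>r\<in>Os. q r * 1)"
        proof (rule sum_mono)
          fix r assume r: "r \<in> Os"
          have "\<bar>D e r\<bar> \<le> 1" using Dbd e r by blast
          then have "D e r * D e r \<le> 1" by (metis abs_mult_self_eq abs_ge_zero mult_le_one)
          then show "q r * (D e r * D e r) \<le> q r * 1" using qnn r by (intro mult_left_mono) auto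
        qed
        also have "\<dots> = 1" using q1 by simp
        finally show ?thesis .
      qed
      have Sg: "(\<Sum>i\<in>V. g (p i)) = (\<Sum>i\<in>V. D e (p i)) - s * m0 e" for p
      proof -
        have "(\<Sum>i\<in>V. g (p i)) = (\<Sum>i\<in>V. D e (p i)) - n * (u * \<eta> * m0 e)"
          by (simp add: g_def c_def qD sum_subtractf n_def)
        moreover have "n * (u * \<eta> * m0 e) = s * m0 e" using nueta by (simp add: mult.assoc[symmetric])
        ultimately show ?thesis by simp
      qed
      have "bad e = {p \<in> ?Pi. s / 2 \<le> \<bar>\<Sum>i\<in>V. g (p i)\<bar>}" by (simp add: bad_def Sg)
      then have "(\<Sum>p\<in>bad e. ?Q p) \<le> n * (\<Sum>r\<in>Os. q r * (g r * g r)) / (s / 2)\<^sup>2"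
        using pi_cheb[OF finV finO q1 g0 qnn, of "s / 2"] s0 by (simp add: n_def)
      also have "\<dots> \<le> n * 1 / (s / 2)\<^sup>2"
        using g2 n0' s0 by (intro divide_right_mono mult_left_mono) auto
      also have "\<dots> = 4 * N * N / (\<kappa> * \<kappa>)"
        using n0' sq N0 k0 by (simp add: s_def u_def power2_eq_square field_simps)
      finally show ?thesis .
    qed
    define badM where "badM = {p \<in> ?Pi. B < \<eta> * (\<Sum>i\<in>V. m (p i))}"
    have badMm: "(\<Sum>p\<in>badM. ?Q p) \<le> 1 / 16"
    proof -
      define c where "c = (\<Sum>r\<in>Os. q r * m r)"
      define g where "g r = m r - c" for r
      have qm: "c = u * \<eta> * (\<Sum>r\<in>Os. m r * m r)"
      proof -
        have "c = u * (\<Sum>r\<in>Os. m r) + u * \<eta> * (\<Sum>r\<in>Os. m r * m r)"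
          unfolding c_def by (simp add: q_def algebra_simps sum.distrib sum_distrib_left)
        then show ?thesis using msum by simp
      qed
      have g0: "(\<Sum>r\<in>Os. q r * g r) = 0"
      proof -
        have "(\<Sum>r\<in>Os. q r * g r) = (\<Sum>r\<in>Os. q r * m r - q r * c)"
          by (simp add: g_def right_diff_distrib)
        also have "\<dots> = (\<Sum>r\<in>Os. q r * m r) - (\<Sum>r\<in>Os. q r) * c"
          by (simp add: sum_subtractf sum_distrib_right)
        finally have "(\<Sum>r\<in>Os. q r * g r) = c - (\<Sum>r\<in>Os. q r) * c" by (simp add: c_def)
        then show ?thesis using q1 by simp
      qed
      have g2: "(\<Sum>r\<in>Os. q r * (g r * g r)) \<le> M * M"
      proof -
        have "(\<Sum>r\<in>Os. q r * (g r * g r)) \<le> (\<Sum>r\<in>Os. q r * (m r * m r))"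
          unfolding g_def c_def by (rule var_le[OF finO q1 qnn])
        also have "\<dots> \<le> (\<Sum>r\<in>Os. q r * (M * M))"
        proof (rule sum_mono)
          fix r assume r: "r \<in> Os"
          have "\<bar>m r\<bar> \<le> M" using mM r by blast
          then have "\<bar>m r\<bar> * \<bar>m r\<bar> \<le> M * M" using M1 by (intro mult_mono) auto
          then have "m r * m r \<le> M * M" by (simp add: abs_mult_self_eq)
          then show "q r * (m r * m r) \<le> q r * (M * M)" using qnn r by (intro mult_left_mono) auto
        qed
        also have "\<dots> = M * M" using q1 by (simp add: sum_distrib_right[symmetric])
        finally show ?thesis .
      qed
      have Sg: "\<eta> * (\<Sum>i\<in>V. m (p i)) = \<eta> * (\<Sum>i\<in>V. g (p i)) + \<kappa> * \<kappa> * A2" for p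
      proof -
        have "(\<Sum>i\<in>V. m (p i)) = (\<Sum>i\<in>V. g (p i)) + n * c"
          by (simp add: g_def sum_subtractf n_def)
        then have "\<eta> * (\<Sum>i\<in>V. m (p i)) = \<eta> * (\<Sum>i\<in>V. g (p i)) + (\<eta> * \<eta> * n) * (u * (\<Sum>r\<in>Os. m r * m r))"
          by (simp add: qm algebra_simps)
        then show ?thesis using etan by (simp add: A2_def)
      qed
      define t where "t = 4 * \<kappa> * M / \<eta>"
      have t0: "t > 0" using k0 M1 eta0 by (simp add: t_def)
      have sub: "badM \<subseteq> {p \<in> ?Pi. t \<le> \<bar>\<Sum>i\<in>V. g (p i)\<bar>}"
      proof
        fix p assume p: "p \<in> badM"
        then have "4 * \<kappa> * M < \<eta> * (\<Sum>i\<in>V. g (p i))" using Sg[of p] by (simp add: badM_def B_def)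
        then have "t < (\<Sum>i\<in>V. g (p i))" using eta0 by (simp add: t_def field_simps)
        then show "p \<in> {p \<in> ?Pi. t \<le> \<bar>\<Sum>i\<in>V. g (p i)\<bar>}" using p by (auto simp: badM_def)
      qed
      have "(\<Sum>p\<in>badM. ?Q p) \<le> (\<Sum>p\<in>{p \<in> ?Pi. t \<le> \<bar>\<Sum>i\<in>V. g (p i)\<bar>}. ?Q p)"
        using sub finPi Qnn by (intro sum_mono2) auto
      also have "\<dots> \<le> n * (\<Sum>r\<in>Os. q r * (g r * g r)) / t\<^sup>2"
        using pi_cheb[OF finV finO q1 g0 qnn t0] by (simp add: n_def)
      also have "\<dots> \<le> n * (M * M) / t\<^sup>2"
        using g2 n0' t0 by (intro divide_right_mono mult_left_mono) auto
      also have "\<dots> = (\<eta> * \<eta> * n) / (16 * \<kappa> * \<kappa>)"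
      proof -
        have "t\<^sup>2 = (16 * \<kappa> * \<kappa> * (M * M)) / (\<eta> * \<eta>)"
          by (simp add: t_def power2_eq_square)
        then have "n * (M * M) / t\<^sup>2 = n * (M * M) * (\<eta> * \<eta>) / (16 * \<kappa> * \<kappa> * (M * M))"
          by simp
        also have "\<dots> = (\<eta> * \<eta> * n) / (16 * \<kappa> * \<kappa>)"
          using M1 by (simp add: ac_simps)
        finally show ?thesis .
      qed
      also have "\<dots> = 1 / 16" using etan k0 by simp
      finally show ?thesis .
    qed
    define G where "G = {p \<in> ?Pi. (\<forall>e\<in>Ed. \<bar>(\<Sum>i\<in>V. D e (p i)) - s * m0 e\<bar> < s / 2) \<and> \<eta> * (\<Sum>i\<in>V. m (p i)) \<le> B}"
    have Gm: "(\<Sum>p\<in>G. ?Q p) \<ge> 1 / 2"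
    proof -
      have pw: "?Q p \<le> ?Q p * (of_bool (p \<in> G) + (\<Sum>e\<in>Ed. of_bool (p \<in> bad e)) + of_bool (p \<in> badM))"
        if p: "p \<in> ?Pi" for p
      proof -
        have "1 \<le> of_bool (p \<in> G) + (\<Sum>e\<in>Ed. of_bool (p \<in> bad e)) + (of_bool (p \<in> badM) :: real)"
        proof (cases "p \<in> G")
          case True
          have "0 \<le> (\<Sum>e\<in>Ed. (of_bool (p \<in> bad e) :: real))" by (intro sum_nonneg) auto
          then show ?thesis using True by simp
        next
          case False
          then consider e where "e \<in> Ed" "p \<in> bad e" | "p \<in> badM"
            using p by (auto simp: G_def bad_def badM_def not_less not_le)
          then show ?thesis
          proof cases
            case (1 e)
            have "(1::real) \<le> (\<Sum>e\<in>Ed. of_bool (p \<in> bad e))"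
              using 1 finE member_le_sum[of e Ed "\<lambda>e. (of_bool (p \<in> bad e) :: real)"] by auto
            then show ?thesis by simp
          next
            case 2
            have "0 \<le> (\<Sum>e\<in>Ed. (of_bool (p \<in> bad e) :: real))" by (intro sum_nonneg) auto
            then show ?thesis using 2 by simp
          qed
        qed
        then show ?thesis using Qnn[OF p] by (metis mult.right_neutral mult_left_mono)
      qed
      have subs: "G \<subseteq> ?Pi" "badM \<subseteq> ?Pi" "\<And>e. bad e \<subseteq> ?Pi"
        by (auto simp: G_def badM_def bad_def)
      have mass: "(\<Sum>p\<in>?Pi. ?Q p * of_bool (p \<in> A)) = (\<Sum>p\<in>A. ?Q p)" if "A \<subseteq> ?Pi" for A
      proof -
        have "(\<Sum>p\<in>?Pi. ?Q p * of_bool (p \<in> A)) = (\<Sum>p\<in>?Pi \<inter> A. ?Q p)"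
          using finPi by (simp add: sum.inter_restrict)
        also have "?Pi \<inter> A = A" using that by auto
        finally show ?thesis .
      qed
      have "1 = (\<Sum>p\<in>?Pi. ?Q p)" using pi_tot[OF finV finO q1] by simp
      also have "\<dots> \<le> (\<Sum>p\<in>?Pi. ?Q p * (of_bool (p \<in> G) + (\<Sum>e\<in>Ed. of_bool (p \<in> bad e)) + of_bool (p \<in> badM)))"
        using pw by (intro sum_mono) auto
      also have "\<dots> = (\<Sum>p\<in>?Pi. ?Q p * of_bool (p \<in> G)) + (\<Sum>e\<in>Ed. \<Sum>p\<in>?Pi. ?Q p * of_bool (p \<in> bad e)) + (\<Sum>p\<in>?Pi. ?Q p * of_bool (p \<in> badM))"
        by (simp add: distrib_left sum.distrib sum_distrib_left sum.swap[of _ ?Pi Ed])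
      also have "\<dots> = (\<Sum>p\<in>G. ?Q p) + (\<Sum>e\<in>Ed. \<Sum>p\<in>bad e. ?Q p) + (\<Sum>p\<in>badM. ?Q p)"
        using mass subs by simp
      also have "\<dots> \<le> (\<Sum>p\<in>G. ?Q p) + (\<Sum>e\<in>Ed. 4 * N * N / (\<kappa> * \<kappa>)) + 1 / 16"
        using badm badMm by (intro add_mono sum_mono) auto
      also have "\<dots> = (\<Sum>p\<in>G. ?Q p) + P2 * (4 * N * N / (\<kappa> * \<kappa>)) + 1 / 16"
        by (simp add: P2_def)
      finally have 1: "1 \<le> (\<Sum>p\<in>G. ?Q p) + P2 * (4 * N * N / (\<kappa> * \<kappa>)) + 1 / 16" .
      have "P2 * (4 * N * N / (\<kappa> * \<kappa>)) \<le> 1 / 4"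
        by (rule aux_frac[OF N0 P20 \<kappa>_def])
      then show ?thesis using 1 by linarith
    qed
    have QG: "?Q p * exp (- B) \<le> u ^ card V" if "p \<in> G" for p
    proof -
      have p: "p \<in> ?Pi" "\<eta> * (\<Sum>i\<in>V. m (p i)) \<le> B" using that by (auto simp: G_def)
      have "?Q p = (\<Prod>k\<in>V. u * (1 + \<eta> * m (p k)))" by (simp add: q_def)
      also have "\<dots> = u ^ card V * (\<Prod>k\<in>V. 1 + \<eta> * m (p k))" by (simp add: prod.distrib)
      also have "\<dots> \<le> u ^ card V * (\<Prod>k\<in>V. exp (\<eta> * m (p k)))"
      proof (intro mult_left_mono prod_mono conjI)
        fix k assume k: "k \<in> V"
        have "p k \<in> Os" using p(1) k by auto
        then have "q (p k) \<ge> u / 2" by (rule q0)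
        then have "u * (1 + \<eta> * m (p k)) \<ge> u * 0" using u0 by (simp add: q_def)
        then show "0 \<le> 1 + \<eta> * m (p k)" using u0 by (simp add: zero_le_mult_iff)
        show "1 + \<eta> * m (p k) \<le> exp (\<eta> * m (p k))" by (rule one_plus_le_exp)
      qed (use u0 in simp)
      also have "\<dots> = u ^ card V * exp (\<eta> * (\<Sum>k\<in>V. m (p k)))"
        using finV by (simp add: exp_sum sum_distrib_left)
      also have "\<dots> \<le> u ^ card V * exp B"
        using p(2) u0 by (intro mult_left_mono) auto
      finally have "?Q p \<le> u ^ card V * exp B" .
      then have "?Q p * exp (- B) \<le> u ^ card V * exp B * exp (- B)"
        by (intro mult_right_mono) auto
      also have "\<dots> = u ^ card V" by (simp add: exp_minus)
      finally show ?thesis .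
    qed
    have "exp (- B) / 2 \<le> real (card G) * u ^ card V"
    proof -
      have "exp (- B) / 2 \<le> exp (- B) * (\<Sum>p\<in>G. ?Q p)" using Gm by simp
      also have "\<dots> = (\<Sum>p\<in>G. ?Q p * exp (- B))" by (simp add: sum_distrib_left mult.commute)
      also have "\<dots> \<le> (\<Sum>p\<in>G. u ^ card V)" using QG by (intro sum_mono) auto
      also have "\<dots> = real (card G) * u ^ card V" by simp
      finally show ?thesis .
    qed
    then have "exp (- B) / 2 \<le> real (card G) / N ^ card V"
      by (simp add: u_def power_one_over)
    then have "\<epsilon> * N ^ card V \<le> real (card G)"
      using N0 by (simp add: \<epsilon>_def pos_le_divide_eq)
    moreover have "card G \<le> card {p \<in> ?Pi. \<forall>e\<in>Ed. \<bar>(\<Sum>i\<in>V. D e (p i)) - s * m0 e\<bar> < s / 2}"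
      using finPi by (intro card_mono) (auto simp: G_def)
    ultimately show "\<exists>s>0. \<epsilon> * real (card Os) ^ card V \<le>
              real (card {p \<in> ?Pi. \<forall>e\<in>Ed. \<bar>(\<Sum>i\<in>V. D e (p i)) - s * m0 e\<bar> < s / 2})"
      using s0 by (intro exI[of _ s]) (auto simp: N_def)
  qed
  ultimately show ?thesis by blast
qed


lemma card_filter_int:
  assumes "finite A"
  shows "int (card {i \<in> A. P i}) = (\<Sum>i\<in>A. if P i then 1 else 0)"
proof -
  have "int (card {i \<in> A. P i}) = (\<Sum>i\<in>{i \<in> A. P i}. 1)" by simp
  also have "\<dots> = (\<Sum>i\<in>A. if P i then 1 else 0)" by (rule sum.inter_filter[OF assms])
  finally show ?thesis .
qed

lemma margin_sum:
  assumes "finite (voters P)"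
  shows "margin P x y = (\<Sum>i\<in>voters P. dl (prefs P i) x y)"
  using assms by (simp add: margin_def support_def card_filter_int dl_def sum_subtractf)

lemma dl_conv: "dl (R\<inverse>) x y = - dl R x y"
  by (simp add: dl_def)

lemma dl_bound: "\<bar>dl R x y\<bar> \<le> 1"
  by (simp add: dl_def)

lemma linear_conv: "linear_order_on' X R \<Longrightarrow> linear_order_on' X (R\<inverse>)"
  unfolding linear_order_on'_def strict_weak_order_on_def by blast

definition LO :: "'x set \<Rightarrow> ('x \<times> 'x) set set" where
  "LO X = {R. linear_order_on' X R}"

lemma LO_finite: "finite X \<Longrightarrow> finite (LO X)"
proof -
  assume "finite X"
  have "LO X \<subseteq> Pow (X \<times> X)"
    by (auto simp: LO_def linear_order_on'_def strict_weak_order_on_def)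
  then show ?thesis using \<open>finite X\<close> by (meson finite_Pow_iff finite_SigmaI finite_subset)
qed

lemma LO_dl_sum: "finite X \<Longrightarrow> (\<Sum>R\<in>LO X. dl R x y) = 0"
proof -
  assume fX: "finite X"
  have "(\<Sum>R\<in>LO X. dl R x y) = (\<Sum>R\<in>LO X. dl (R\<inverse>) x y)"
    by (rule sum.reindex_bij_witness[of _ converse converse]) (auto simp: LO_def linear_conv)
  also have "\<dots> = - (\<Sum>R\<in>LO X. dl R x y)" by (simp add: dl_conv sum_negf)
  finally show ?thesis by simp
qed

definition prof :: "'v set \<Rightarrow> 'x set \<Rightarrow> ('v \<Rightarrow> ('x \<times> 'x) set) \<Rightarrow> ('v, 'x) profile" where
  "prof V X p = \<lparr>voters = V, alts = X, prefs = (\<lambda>i. if i \<in> V then p i else {})\<rparr>"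

lemma prof_simps[simp]: "voters (prof V X p) = V" "alts (prof V X p) = X"
  by (auto simp: prof_def)

lemma prof_margin: "finite V \<Longrightarrow> margin (prof V X p) x y = (\<Sum>i\<in>V. dl (p i) x y)"
  by (simp add: margin_sum prof_def)

lemma prof_inj: "inj_on (prof V X) (PiE V (\<lambda>_. Os))"
proof (rule inj_onI)
  fix p p' assume p: "p \<in> PiE V (\<lambda>_. Os)" "p' \<in> PiE V (\<lambda>_. Os)" and e: "prof V X p = prof V X p'"
  have pr: "prefs (prof V X p) i = p i" "prefs (prof V X p') i = p' i" if "i \<in> V" for i
    using that by (simp_all add: prof_def)
  have "\<forall>i\<in>V. p i = p' i"
  proof
    fix i assume i: "i \<in> V"
    have "prefs (prof V X p) i = prefs (prof V X p') i" using e by simp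
    then show "p i = p' i" using pr[OF i] by simp
  qed
  then show "p = p'" using p by (auto intro: PiE_ext)
qed

lemma lin_profiles_eq:
  assumes "finite V" "V \<noteq> {}" "finite X" "X \<noteq> {}"
  shows "lin_profiles X V = prof V X ` PiE V (\<lambda>_. LO X)"
proof
  show "lin_profiles X V \<subseteq> prof V X ` PiE V (\<lambda>_. LO X)"
  proof
    fix P assume P: "P \<in> lin_profiles X V"
    then have lp: "is_linear_profile P" "alts P = X" "voters P = V" by (auto simp: lin_profiles_def)
    define p where "p = restrict (prefs P) V"
    have "p \<in> PiE V (\<lambda>_. LO X)"
      using lp by (auto simp: p_def LO_def is_linear_profile_def)
    moreover have "P = prof V X p"
    proof -
      have out: "\<forall>i. i \<notin> V \<longrightarrow> prefs P i = {}" using lp by (auto simp: is_linear_profile_def is_profile_def)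
      have "prefs P = (\<lambda>i. if i \<in> V then p i else {})" using out by (intro ext) (auto simp: p_def)
      then show ?thesis unfolding prof_def using lp(2,3) by (cases P) simp
    qed
    ultimately show "P \<in> prof V X ` PiE V (\<lambda>_. LO X)" by blast
  qed
next
  show "prof V X ` PiE V (\<lambda>_. LO X) \<subseteq> lin_profiles X V"
  proof
    fix P assume "P \<in> prof V X ` PiE V (\<lambda>_. LO X)"
    then obtain p where p: "p \<in> PiE V (\<lambda>_. LO X)" "P = prof V X p" by blast
    have "is_linear_profile P"
      using p assms unfolding is_linear_profile_def is_profile_def
      by (auto simp: prof_def LO_def linear_order_on'_def)
    then show "P \<in> lin_profiles X V" using p by (simp add: lin_profiles_def)
  qed
qed

lemma omi_eq2:
  assumes "ordinal_margin_invariant F" "is_profile P" "is_profile P'" "ordinal_margin_graph P = ordinal_margin_graph P'"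
  shows "F P = F P'"
  using assms(1)[unfolded ordinal_margin_invariant_def, rule_format, OF conjI[OF assms(2) conjI[OF assms(3) assms(4)]]] .

lemma gen_mono: "gen g m X \<Longrightarrow> g' \<le> g \<Longrightarrow> gen g' m X"
  unfolding gen_def by force

lemma asym_unique:
  fixes F :: "('v, 'x) profile \<Rightarrow> 'x set" and P0 :: "('v, 'x) profile"
  assumes vinf: "infinite (UNIV :: 'v set)"
    and omi: "ordinal_margin_invariant F" and ar: "asymptotically_resolvable F"
    and P0: "is_linear_profile P0" and g: "gen 1 (margin P0) (alts P0)"
  shows "card (F P0) \<le> 1"
proof (rule ccontr)
  assume "\<not> card (F P0) \<le> 1"
  then have c1: "card (F P0) > 1" by simp
  define X where "X = alts P0"
  define W where "W = voters P0"
  have P0p: "is_profile P0" using P0 by (simp add: is_linear_profile_def)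
  have fX: "finite X" "X \<noteq> {}" and fW: "finite W" "W \<noteq> {}"
    using P0p by (auto simp: is_profile_def X_def W_def)
  define Os where "Os = LO X"
  have finO: "finite Os" using fX by (simp add: Os_def LO_finite)
  have inO: "prefs P0 i \<in> Os" if "i \<in> W" for i
    using P0 that by (simp add: is_linear_profile_def Os_def LO_def X_def W_def)
  have neO: "Os \<noteq> {}" using inO fW by blast
  define N where "N = real (card Os)"
  define cnt where "cnt R = real (card {i \<in> W. prefs P0 i = R})" for R
  define m where "m R = cnt R - real (card W) / N" for R
  have grp: "(\<Sum>R\<in>Os. \<Sum>i | i \<in> W \<and> prefs P0 i = R. h i) = (\<Sum>i\<in>W. h i)" for h :: "'v \<Rightarrow> real"
    by (rule sum.group) (use fW finO inO in auto)
  have cntsum: "(\<Sum>R\<in>Os. cnt R) = real (card W)"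
    using grp[of "\<lambda>_. 1"] by (simp add: cnt_def)
  have N0: "N > 0" using finO neO by (simp add: N_def card_gt_0_iff)
  have msum: "(\<Sum>R\<in>Os. m R) = 0"
    using cntsum N0 by (simp add: m_def sum_subtractf N_def)
  define Ed where "Ed = X \<times> X"
  define D where "D e R = real_of_int (dl R (fst e) (snd e))" for e :: "'x \<times> 'x" and R
  define m0 where "m0 e = real_of_int (margin P0 (fst e) (snd e))" for e :: "'x \<times> 'x"
  have Dsum: "\<forall>e\<in>Ed. (\<Sum>R\<in>Os. D e R) = 0"
    using LO_dl_sum[OF fX(1)] by (simp add: D_def Os_def flip: of_int_sum)
  have mD: "\<forall>e\<in>Ed. (\<Sum>R\<in>Os. m R * D e R) = m0 e"
  proof
    fix e assume "e \<in> Ed"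
    have "(\<Sum>R\<in>Os. m R * D e R) = (\<Sum>R\<in>Os. cnt R * D e R) - real (card W) / N * (\<Sum>R\<in>Os. D e R)"
      by (simp add: m_def algebra_simps sum_subtractf sum_distrib_left sum_divide_distrib)
    also have "(\<Sum>R\<in>Os. D e R) = 0" using Dsum \<open>e \<in> Ed\<close> by blast
    also have "(\<Sum>R\<in>Os. cnt R * D e R) = (\<Sum>R\<in>Os. \<Sum>i | i \<in> W \<and> prefs P0 i = R. D e (prefs P0 i))"
      by (intro sum.cong refl) (simp add: cnt_def)
    also have "\<dots> = (\<Sum>i\<in>W. D e (prefs P0 i))" by (rule grp)
    also have "\<dots> = m0 e"
      using margin_sum[of P0 "fst e" "snd e"] fW by (simp add: m0_def D_def W_def)
    finally show "(\<Sum>R\<in>Os. m R * D e R) = m0 e" by simp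
  qed
  have Dbd: "\<forall>e\<in>Ed. \<forall>r\<in>Os. \<bar>D e r\<bar> \<le> 1"
  proof (intro ballI)
    fix e :: "'x \<times> 'x" and r
    have "\<bar>dl r (fst e) (snd e)\<bar> \<le> 1" by (rule dl_bound)
    then have "real_of_int \<bar>dl r (fst e) (snd e)\<bar> \<le> 1" by simp
    then show "\<bar>D e r\<bar> \<le> 1" by (simp add: D_def)
  qed
  obtain \<epsilon> n0 where eps: "\<epsilon> > 0" and main: "\<forall>V::'v set. finite V \<and> n0 \<le> card V \<longrightarrow>
           (\<exists>s>0. \<epsilon> * real (card Os) ^ card V \<le>
              real (card {p \<in> PiE V (\<lambda>_. Os). \<forall>e\<in>Ed. \<bar>(\<Sum>i\<in>V. D e (p i)) - s * m0 e\<bar> < s / 2}))"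
    using main_est[OF finO neO _ Dbd Dsum msum mD] fX by (auto simp: Ed_def)
  obtain N1 where N1: "\<forall>V. finite V \<and> card V \<ge> N1 \<longrightarrow> unresolved_proportion F X V < \<epsilon>"
    using ar fX eps unfolding asymptotically_resolvable_def by blast
  obtain V :: "'v set" where V: "finite V" "card V = max (max N1 n0) 1"
    using infinite_arbitrarily_large[OF vinf] by blast
  have Vne: "V \<noteq> {}" using V by auto
  obtain s where s: "s > 0" and big: "\<epsilon> * real (card Os) ^ card V \<le>
      real (card {p \<in> PiE V (\<lambda>_. Os). \<forall>e\<in>Ed. \<bar>(\<Sum>i\<in>V. D e (p i)) - s * m0 e\<bar> < s / 2})"
    using main V by auto
  define Good where "Good = {p \<in> PiE V (\<lambda>_. Os). \<forall>e\<in>Ed. \<bar>(\<Sum>i\<in>V. D e (p i)) - s * m0 e\<bar> < s / 2}"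
  have LP: "lin_profiles X V = prof V X ` PiE V (\<lambda>_. Os)"
    using lin_profiles_eq[OF V(1) Vne fX] by (simp add: Os_def)
  have cardLP: "card (lin_profiles X V) = card Os ^ card V"
    unfolding LP using prof_inj[of V X Os] V(1) by (simp add: card_image card_PiE)
  have sub: "prof V X ` Good \<subseteq> {P \<in> lin_profiles X V. card (F P) > 1}"
  proof
    fix P assume "P \<in> prof V X ` Good"
    then obtain p where p: "p \<in> Good" "P = prof V X p" by blast
    have pPi: "p \<in> PiE V (\<lambda>_. Os)" using p by (simp add: Good_def)
    have "P \<in> prof V X ` PiE V (\<lambda>_. Os)" using p(2) pPi by (rule image_eqI)
    then have Plin: "P \<in> lin_profiles X V" using LP by simp
    then have Pp: "is_profile P" by (simp add: lin_profiles_def is_linear_profile_def)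
    have "ordinal_margin_graph P = ordinal_margin_graph P0"
    proof (rule omg_eq_close[OF _ g, where s = s])
      show "alts P = alts P0" using p by (simp add: X_def)
      show "\<forall>x\<in>alts P0. \<forall>y\<in>alts P0. \<bar>real_of_int (margin P x y) - s * real_of_int (margin P0 x y)\<bar> < s * real_of_int 1 / 2"
      proof (intro ballI)
        fix x y assume xy: "x \<in> alts P0" "y \<in> alts P0"
        then have "(x, y) \<in> Ed" by (simp add: Ed_def X_def)
        then have "\<bar>(\<Sum>i\<in>V. D (x, y) (p i)) - s * m0 (x, y)\<bar> < s / 2" using p by (simp add: Good_def)
        moreover have "real_of_int (margin P x y) = (\<Sum>i\<in>V. D (x, y) (p i))"
          using prof_margin[OF V(1)] p by (simp add: D_def flip: of_int_sum)
        ultimately show "\<bar>real_of_int (margin P x y) - s * real_of_int (margin P0 x y)\<bar> < s * real_of_int 1 / 2"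
          by (simp add: m0_def)
      qed
    qed (use s in auto)
    then have "F P = F P0" using omi_eq2[OF omi Pp P0p] by simp
    then show "P \<in> {P \<in> lin_profiles X V. card (F P) > 1}" using Plin c1 by simp
  qed
  have finLP: "finite (lin_profiles X V)" unfolding LP using V(1) finO by (simp add: finite_PiE)
  have "card Good \<le> card {P \<in> lin_profiles X V. card (F P) > 1}"
  proof -
    have GP: "Good \<subseteq> PiE V (\<lambda>_. Os)" unfolding Good_def by (rule Collect_restrict)
    have "card (prof V X ` Good) = card Good"
      by (rule card_image[OF inj_on_subset[OF prof_inj GP]])
    then have "card Good = card (prof V X ` Good)" by simp
    also have "\<dots> \<le> card {P \<in> lin_profiles X V. card (F P) > 1}"
      using sub finLP by (intro card_mono) auto
    finally show ?thesis .
  qed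
  then have "\<epsilon> * real (card Os) ^ card V \<le> real (card {P \<in> lin_profiles X V. card (F P) > 1})"
    using big by (simp add: Good_def)
  then have "\<epsilon> \<le> unresolved_proportion F X V"
    unfolding unresolved_proportion_def cardLP using N0 by (simp add: N_def pos_le_divide_eq)
  moreover have "unresolved_proportion F X V < \<epsilon>" using N1 V by auto
  ultimately show False by simp
qed


lemma addk_prefs: "prefs (addk vv n L k P) i \<in> {prefs P i, L}"
  by (induction k) (auto simp: add_voter_def)

lemma addk_prefs_new: "i \<in> voters (addk vv n L k P) \<Longrightarrow> i \<notin> voters P \<Longrightarrow> prefs (addk vv n L k P) i = L"
proof (induction k)
  case 0 then show ?case by simp
next
  case (Suc k)
  show ?case
  proof (cases "i = vv (n + k)")
    case True then show ?thesis by (simp add: add_voter_def)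
  next
    case False
    then have "i \<in> voters (addk vv n L k P)" using Suc.prems by simp
    then show ?thesis using Suc False by (simp add: add_voter_def)
  qed
qed

lemma addbs_prefs: "prefs (addbs vv n bs P) i \<in> insert (prefs P i) (fst ` set bs)"
proof (induction bs arbitrary: n P)
  case Nil then show ?case by simp
next
  case (Cons p bs)
  obtain L k where p: "p = (L, k)" by (cases p)
  have "prefs (addbs vv (n + k) bs (addk vv n L k P)) i \<in> insert (prefs (addk vv n L k P) i) (fst ` set bs)"
    by (rule Cons.IH)
  then show ?case using addk_prefs[of vv n L k P i] p by auto
qed

lemma addbs_prefs_new: "i \<in> voters (addbs vv n bs P) \<Longrightarrow> i \<notin> voters P \<Longrightarrow> prefs (addbs vv n bs P) i \<in> fst ` set bs"
proof (induction bs arbitrary: n P)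
  case Nil then show ?case by simp
next
  case (Cons p bs)
  obtain L k where p: "p = (L, k)" by (cases p)
  show ?case
  proof (cases "i \<in> voters (addk vv n L k P)")
    case True
    then have "prefs (addk vv n L k P) i = L" using addk_prefs_new[OF True Cons.prems(2)] by simp
    moreover have "prefs (addbs vv (n + k) bs (addk vv n L k P)) i \<in> insert (prefs (addk vv n L k P) i) (fst ` set bs)"
      by (rule addbs_prefs)
    ultimately show ?thesis using p by auto
  next
    case False
    then have "prefs (addbs vv (n + k) bs (addk vv n L k P)) i \<in> fst ` set bs"
      using Cons.IH[of "n + k" "addk vv n L k P"] Cons.prems p False by simp
    then show ?thesis using p by auto
  qed
qed

lemma chain_linear:
  assumes lin: "\<forall>(L, k)\<in>set (bs @ ch). linear_order_on' X L" and X: "finite X" "X \<noteq> {}"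
    and t: "tot bs > 0" and inj: "inj vv"
  shows "is_linear_profile (addbs vv (tot bs) ch (mkp vv X bs))"
proof -
  have swo: "\<forall>(L, k)\<in>set bs. strict_weak_order_on X L" "\<forall>(L, k)\<in>set ch. strict_weak_order_on X L"
    using lin by (auto simp: linear_order_on'_def)
  have g0: "good (mkp vv X bs)" unfolding mkp_def using swo(1) X by (intro addbs_good good_E0) auto
  have g: "good (addbs vv (tot bs) ch (mkp vv X bs))" using g0 swo(2) by (intro addbs_good) auto
  have ne: "voters (addbs vv (tot bs) ch (mkp vv X bs)) \<noteq> {}"
    using t by (auto simp: addbs_voters mkp_voters)
  have pl: "linear_order_on' X (prefs (addbs vv (tot bs) ch (mkp vv X bs)) i)"
    if i: "i \<in> voters (addbs vv (tot bs) ch (mkp vv X bs))" for i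
  proof (cases "i \<in> voters (mkp vv X bs)")
    case True
    then have "prefs (mkp vv X bs) i \<in> fst ` set bs"
      unfolding mkp_def by (intro addbs_prefs_new) (auto simp: mkp_def)
    moreover have "prefs (addbs vv (tot bs) ch (mkp vv X bs)) i \<in> insert (prefs (mkp vv X bs) i) (fst ` set ch)"
      by (rule addbs_prefs)
    ultimately show ?thesis using lin by auto
  next
    case False
    then have "prefs (addbs vv (tot bs) ch (mkp vv X bs)) i \<in> fst ` set ch"
      using i by (intro addbs_prefs_new)
    then show ?thesis using lin by auto
  qed
  show ?thesis unfolding is_linear_profile_def is_profile_good using g ne pl by simp
qed



context four
begin

lemma linX': "distinct xs \<Longrightarrow> set xs = X \<Longrightarrow> linear_order_on' X (lin xs)"
  using lin_linear by metis

lemma p4a_lin: "is_linear_profile p4a"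
  unfolding p4a_def p1_def b_p1_def
  by (rule chain_linear[OF _ finX neX _ injv]) (auto simp del: lin.simps intro!: linX')

lemma p3c_lin: "is_linear_profile p3c"
  unfolding p3c_def p5_def b_p5_def
  by (rule chain_linear[OF _ finX neX _ injv]) (auto simp del: lin.simps intro!: linX')

end

theorem theorem1:
  assumes "infinite (UNIV :: 'x set)" and "infinite (UNIV :: 'v set)"
  shows "\<not> (\<exists>F :: ('v, 'x) profile \<Rightarrow> 'x set.
             voting_method F \<and> positive_involvement F \<and>
             condorcet_winner_criterion F \<and> condorcet_loser_criterion F \<and>
             single_voter_resolvable F \<and> ordinal_margin_invariant F)
       \<and> \<not> (\<exists>F :: ('v, 'x) profile \<Rightarrow> 'x set.
             voting_method F \<and> positive_involvement F \<and>
             condorcet_winner_criterion F \<and> condorcet_loser_criterion F \<and>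
             asymptotically_resolvable F \<and> ordinal_margin_invariant F)"
proof -
  obtain f :: "nat \<Rightarrow> 'x" where f: "inj f"
    using infinite_iff_countable_subset[of "UNIV :: 'x set"] assms(1) by auto
  obtain vv :: "nat \<Rightarrow> 'v" where vv: "inj vv"
    using infinite_iff_countable_subset[of "UNIV :: 'v set"] assms(2) by auto
  have dist: "distinct [f 0, f 1, f 2, f 3]" using f by (simp add: inj_eq)
  interpret fr: four "f 0" "f 1" "f 2" "f 3" vv
    by (rule four.intro[OF dist vv])
  have lin4: "is_linear_profile fr.p4a" "is_linear_profile fr.p3c" by (rule fr.p4a_lin, rule fr.p3c_lin)
  have prof4: "is_profile fr.p4a" "is_profile fr.p3c" using lin4 by (simp_all add: is_linear_profile_def)
  show ?thesis
  proof (intro conjI notI)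
    assume "\<exists>F :: ('v, 'x) profile \<Rightarrow> 'x set.
             voting_method F \<and> positive_involvement F \<and>
             condorcet_winner_criterion F \<and> condorcet_loser_criterion F \<and>
             single_voter_resolvable F \<and> ordinal_margin_invariant F"
    then obtain F :: "('v, 'x) profile \<Rightarrow> 'x set" where F: "voting_method F" "positive_involvement F"
      "condorcet_winner_criterion F" "condorcet_loser_criterion F"
      "single_voter_resolvable F" "ordinal_margin_invariant F" by blast
    have "card (F fr.p4a) > 1 \<or> card (F fr.p3c) > 1" by (rule fr.key[OF F(1-4) F(6)])
    moreover have "card (F fr.p4a) \<le> 1" by (rule svr_unique[OF F(1) F(5) F(6) prof4(1) fr.gen_p4a])
    moreover have "card (F fr.p3c) \<le> 1" by (rule svr_unique[OF F(1) F(5) F(6) prof4(2) fr.gen_p3c])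
    ultimately show False by linarith
  next
    assume "\<exists>F :: ('v, 'x) profile \<Rightarrow> 'x set.
             voting_method F \<and> positive_involvement F \<and>
             condorcet_winner_criterion F \<and> condorcet_loser_criterion F \<and>
             asymptotically_resolvable F \<and> ordinal_margin_invariant F"
    then obtain F :: "('v, 'x) profile \<Rightarrow> 'x set" where F: "voting_method F" "positive_involvement F"
      "condorcet_winner_criterion F" "condorcet_loser_criterion F"
      "asymptotically_resolvable F" "ordinal_margin_invariant F" by blast
    have "card (F fr.p4a) > 1 \<or> card (F fr.p3c) > 1" by (rule fr.key[OF F(1-4) F(6)])
    moreover have "card (F fr.p4a) \<le> 1"
      by (rule asym_unique[OF assms(2) F(6) F(5) lin4(1) gen_mono[OF fr.gen_p4a]]) simp
    moreover have "card (F fr.p3c) \<le> 1"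
      by (rule asym_unique[OF assms(2) F(6) F(5) lin4(2) gen_mono[OF fr.gen_p3c]]) simp
    ultimately show False by linarith
  qed
qed


end
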